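(* Let $S(x)=\sum_{n\ge0}P_n(x)s_n$, $s_n\in\mathbb H^{r\times s}$, where the series converges in a neighborhood $N$ of the origin of $\mathbb R^4\cong\mathbb H$, and assume that the kernel $K_S(x,y)=\sum_{n\ge0}\big(P_n(x)\overline{P_n(y)}I_r-(P_n\odot S)(x)((P_n\odot S)(y))^*\big)$ is defined and positive definite on $N$. Then the series $\sum_nP_ns_n$ converges on all of $\mathcal E$ and defines the unique Schur multiplier on $\mathcal E$ extending $S$.
   Context: For $m\ge0$, $T^m_j=\frac{2(m-j+1)}{(m+1)(m+2)}$, $c_m=\sum_{j=0}^m(-1)^jT^m_j$, $P_m(x)=\frac1{c_m}\sum_{j=0}^mT^m_jx^{m-j}\overline{x}^{\,j}$. $\mathcal E=\{x\in\mathbb H:9x_0^2+x_1^2+x_2^2+x_3^2<1\}$. $\odot$ is the Cauchy–Kovalevskaya product, with $P_n\odot S=\sum_mP_{n+m}s_m$. A kernel $K$ is positive definite on a set $\Omega$ if $\sum_{i,j}u_i^*K(y_i,y_j)u_j\ge0$ for all finite families $y_i\in\Omega$, $u_i\in\mathbb H^r$. An $\mathbb H^{r\times s}$-valued hyperholomorphic $S$ on $\mathcal E$ is a Schur multiplier if $K_S$ converges and is positive definite on $\mathcal E$. *)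

theory Defs
  imports "HOL-Analysis.Analysis"
begin

text \<open>Quaternions, realised via Cayley-Dickson as pairs of complex numbers:
  the pair (a,b) stands for a + b j, i.e. x0 + x1 i + x2 j + x3 k with
  a = x0 + i x1, b = x2 + i x3.  The product-type norm is the Euclidean
  norm of R^4, so the topology is that of R^4.\<close>

type_synonym quat = "complex \<times> complex"

definition qmul :: "quat \<Rightarrow> quat \<Rightarrow> quat" where
  "qmul p q = (fst p * fst q - snd p * cnj (snd q), fst p * snd q + snd p * cnj (fst q))"

definition qcnj :: "quat \<Rightarrow> quat" where
  "qcnj p = (cnj (fst p), - snd p)"

definition qone :: quat where "qone = (1, 0)"

fun qpow :: "quat \<Rightarrow> nat \<Rightarrow> quat" where
  "qpow x 0 = qone"
| "qpow x (Suc n) = qmul x (qpow x n)"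

definition x0 :: "quat \<Rightarrow> real" where "x0 q = Re (fst q)"
definition x1 :: "quat \<Rightarrow> real" where "x1 q = Im (fst q)"
definition x2 :: "quat \<Rightarrow> real" where "x2 q = Re (snd q)"
definition x3 :: "quat \<Rightarrow> real" where "x3 q = Im (snd q)"

definition qnonneg :: "quat \<Rightarrow> bool" where
  "qnonneg q \<longleftrightarrow> x1 q = 0 \<and> x2 q = 0 \<and> x3 q = 0 \<and> x0 q \<ge> 0"

definition ellipsoid :: "quat set" where
  "ellipsoid = {x. 9 * (x0 x)^2 + (x1 x)^2 + (x2 x)^2 + (x3 x)^2 < 1}"

definition T :: "nat \<Rightarrow> nat \<Rightarrow> real" where
  "T m j = 2 * real (m - j + 1) / (real (m + 1) * real (m + 2))"

definition c :: "nat \<Rightarrow> real" where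
  "c m = (\<Sum>j\<le>m. (-1)^j * T m j)"

definition P :: "nat \<Rightarrow> quat \<Rightarrow> quat" where
  "P m x = (1 / c m) *\<^sub>R (\<Sum>j\<le>m. T m j *\<^sub>R qmul (qpow x (m - j)) (qpow (qcnj x) j))"

text \<open>Quaternionic matrices: r x s matrices are elements of quat^'s^'r.\<close>

definition qsmat :: "quat \<Rightarrow> quat^'s^'r \<Rightarrow> quat^'s^'r" where
  "qsmat q A = (\<chi> i j. qmul q (A $ i $ j))"

definition qmatmul :: "quat^'s^'r \<Rightarrow> quat^'t^'s \<Rightarrow> quat^'t^'r" where
  "qmatmul A B = (\<chi> i k. \<Sum>j\<in>UNIV. qmul (A $ i $ j) (B $ j $ k))"

definition qctrans :: "quat^'s^'r \<Rightarrow> quat^'r^'s" where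
  "qctrans A = (\<chi> i j. qcnj (A $ j $ i))"

definition qmat_id :: "quat^'r^'r" where
  "qmat_id = (\<chi> i j. if i = j then qone else 0)"

definition qhform :: "quat^'r \<Rightarrow> quat^'r^'r \<Rightarrow> quat^'r \<Rightarrow> quat" where
  "qhform u A v = (\<Sum>a\<in>UNIV. \<Sum>b\<in>UNIV. qmul (qmul (qcnj (u $ a)) (A $ a $ b)) (v $ b))"

definition series_fun :: "(nat \<Rightarrow> quat^'s^'r) \<Rightarrow> quat \<Rightarrow> quat^'s^'r" where
  "series_fun s x = (\<Sum>n. qsmat (P n x) (s n))"

definition ck_term :: "(nat \<Rightarrow> quat^'s^'r) \<Rightarrow> nat \<Rightarrow> quat \<Rightarrow> nat \<Rightarrow> quat^'s^'r" where
  "ck_term s n x m = qsmat (P (n + m) x) (s m)"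

definition ck :: "(nat \<Rightarrow> quat^'s^'r) \<Rightarrow> nat \<Rightarrow> quat \<Rightarrow> quat^'s^'r" where
  "ck s n x = (\<Sum>m. ck_term s n x m)"

definition K_term :: "(nat \<Rightarrow> quat^'s^'r) \<Rightarrow> nat \<Rightarrow> quat \<Rightarrow> quat \<Rightarrow> quat^'r^'r" where
  "K_term s n x y = qsmat (qmul (P n x) (qcnj (P n y))) qmat_id
                    - qmatmul (ck s n x) (qctrans (ck s n y))"

definition KS :: "(nat \<Rightarrow> quat^'s^'r) \<Rightarrow> quat \<Rightarrow> quat \<Rightarrow> quat^'r^'r" where
  "KS s x y = (\<Sum>n. K_term s n x y)"

definition kernel_converges :: "(nat \<Rightarrow> quat^'s^'r) \<Rightarrow> quat set \<Rightarrow> bool" where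
  "kernel_converges s \<Omega> \<longleftrightarrow>
     (\<forall>x\<in>\<Omega>. \<forall>n. summable (ck_term s n x)) \<and>
     (\<forall>x\<in>\<Omega>. \<forall>y\<in>\<Omega>. summable (\<lambda>n. K_term s n x y))"

definition pos_def_kernel :: "(quat \<Rightarrow> quat \<Rightarrow> quat^'r^'r) \<Rightarrow> quat set \<Rightarrow> bool" where
  "pos_def_kernel K \<Omega> \<longleftrightarrow>
     (\<forall>(k::nat) (y::nat \<Rightarrow> quat) (u::nat \<Rightarrow> quat^'r). (\<forall>i<k. y i \<in> \<Omega>) \<longrightarrow>
        qnonneg (\<Sum>i<k. \<Sum>j<k. qhform (u i) (K (y i) (y j)) (u j)))"

definition schur_multiplier :: "(nat \<Rightarrow> quat^'s^'r) \<Rightarrow> quat set \<Rightarrow> bool" where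
  "schur_multiplier s \<Omega> \<longleftrightarrow>
     (\<forall>x\<in>\<Omega>. summable (\<lambda>n. qsmat (P n x) (s n))) \<and>
     kernel_converges s \<Omega> \<and> pos_def_kernel (KS s) \<Omega>"

end

theory Submission
  imports Defs "HOL-Computational_Algebra.Polynomial" "HOL-Complex_Analysis.Cauchy_Integral_Formula"
begin

lemma qmul_assoc: "qmul (qmul p q) r = qmul p (qmul q r)"
  by (simp add: qmul_def algebra_simps)

lemma qcnj_qmul: "qcnj (qmul p q) = qmul (qcnj q) (qcnj p)"
  by (simp add: qmul_def qcnj_def algebra_simps)

lemma qcnj_qcnj[simp]: "qcnj (qcnj p) = p" by (simp add: qcnj_def zero_prod_def)
lemma qcnj_add[simp]: "qcnj (p + q) = qcnj p + qcnj q" by (simp add: qcnj_def zero_prod_def)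
lemma qcnj_diff[simp]: "qcnj (p - q) = qcnj p - qcnj q" by (simp add: qcnj_def zero_prod_def)
lemma qcnj_zero[simp]: "qcnj 0 = 0" by (simp add: qcnj_def zero_prod_def)
lemma qcnj_sum: "qcnj (sum f A) = sum (\<lambda>i. qcnj (f i)) A"
  by (induct A rule: infinite_finite_induct) auto
lemma qmul_add_left: "qmul (p + q) r = qmul p r + qmul q r"
  by (simp add: qmul_def algebra_simps)
lemma qmul_add_right: "qmul r (p + q) = qmul r p + qmul r q"
  by (simp add: qmul_def algebra_simps)
lemma qmul_diff_left: "qmul (p - q) r = qmul p r - qmul q r"
  by (simp add: qmul_def algebra_simps)
lemma qmul_diff_right: "qmul r (p - q) = qmul r p - qmul r q"
  by (simp add: qmul_def algebra_simps)
lemma qmul_zero_left[simp]: "qmul 0 r = 0" by (simp add: qmul_def zero_prod_def)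
lemma qmul_zero_right[simp]: "qmul r 0 = 0" by (simp add: qmul_def zero_prod_def)
lemma qmul_scaleR_left: "qmul (a *\<^sub>R p) r = a *\<^sub>R qmul p r"
  by (simp add: qmul_def algebra_simps scaleR_conv_of_real)
lemma qmul_scaleR_right: "qmul r (a *\<^sub>R p) = a *\<^sub>R qmul r p"
  by (simp add: qmul_def algebra_simps scaleR_conv_of_real)
lemma qcnj_scaleR: "qcnj (a *\<^sub>R p) = a *\<^sub>R qcnj p"
  by (simp add: qcnj_def scaleR_conv_of_real)
lemma qmul_sum_left: "qmul (sum f A) r = sum (\<lambda>i. qmul (f i) r) A"
  by (induct A rule: infinite_finite_induct) (auto simp: qmul_add_left)
lemma qmul_sum_right: "qmul r (sum f A) = sum (\<lambda>i. qmul r (f i)) A"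
  by (induct A rule: infinite_finite_induct) (auto simp: qmul_add_right)
lemma qmul_one_left[simp]: "qmul qone p = p" by (simp add: qmul_def qone_def)
lemma qmul_one_right[simp]: "qmul p qone = p" by (simp add: qmul_def qone_def)

definition rq :: "real \<Rightarrow> quat" where "rq t = (complex_of_real t, 0)"

lemma qmul_rq_left: "qmul (rq t) p = t *\<^sub>R p"
  by (cases p) (simp add: qmul_def rq_def scaleR_conv_of_real scaleR_prod_def)
lemma qmul_rq_right: "qmul p (rq t) = t *\<^sub>R p"
  by (cases p) (simp add: qmul_def rq_def scaleR_conv_of_real scaleR_prod_def algebra_simps)
lemma qcnj_rq[simp]: "qcnj (rq t) = rq t" by (simp add: qcnj_def rq_def)
lemma rq_scaleR: "a *\<^sub>R rq t = rq (a * t)" by (simp add: rq_def scaleR_conv_of_real)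
lemma rq_sum: "sum (\<lambda>i. rq (f i)) A = rq (sum f A)"
  by (induct A rule: infinite_finite_induct) (auto simp: rq_def zero_prod_def)
lemma qpow_rq: "qpow (rq t) n = rq (t ^ n)"
  by (induct n) (auto simp: qone_def rq_def qmul_def)
lemma norm_rq[simp]: "norm (rq t) = \<bar>t\<bar>" by (simp add: rq_def norm_prod_def)

lemma qmul_cnj_self: "qmul (qcnj p) p = rq ((norm p)^2)"
proof -
  obtain a b where p: "p = (a, b)" by (cases p)
  have "cnj a * a + b * cnj b = complex_of_real ((cmod a)^2 + (cmod b)^2)"
    by (simp only: of_real_add complex_norm_square mult.commute)
  then show ?thesis by (simp add: p qmul_def qcnj_def rq_def norm_prod_def algebra_simps)
qed

lemma norm_qmul: "norm (qmul p q) = norm p * norm q"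
proof -
  obtain a b where p: "p = (a, b)" by (cases p)
  obtain c d where q: "q = (c, d)" by (cases q)
  have "(norm (qmul p q))^2 = (norm p * norm q)^2"
    unfolding p q qmul_def norm_prod_def
    apply (simp add: power_mult_distrib cmod_def)
    apply (simp add: power2_eq_square algebra_simps)
    done
  then show ?thesis by (simp add: power2_eq_iff_nonneg)
qed

lemma norm_qcnj[simp]: "norm (qcnj p) = norm p"
  by (simp add: qcnj_def norm_prod_def)

lemma norm_qone[simp]: "norm qone = 1" by (simp add: qone_def norm_prod_def)
lemma norm_qpow: "norm (qpow x n) = norm x ^ n"
  by (induct n) (simp_all only: qpow.simps norm_qmul norm_qone power.simps)


lemma sumT_nat: "2 * (\<Sum>j\<le>m. m - j + 1) = (m+1)*((m::nat)+2)"
proof (induct m)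
  case 0 then show ?case by simp
next
  case (Suc m)
  have "(\<Sum>j\<le>Suc m. Suc m - j + 1) = (\<Sum>j\<le>m. Suc m - j + 1) + 1"
    by simp
  also have "(\<Sum>j\<le>m. Suc m - j + 1) = (\<Sum>j\<le>m. (m - j + 1) + 1)"
    by (intro sum.cong) (auto simp: Suc_diff_le)
  also have "\<dots> = (\<Sum>j\<le>m. m - j + 1) + (m+1)"
    by (simp only: sum.distrib) simp
  finally have "2 * (\<Sum>j\<le>Suc m. Suc m - j + 1) = 2 * (\<Sum>j\<le>m. m - j + 1) + 2*(m+2)" by simp
  then show ?case using Suc by simp
qed

lemma T_split: "T m j = (2 / (real (m + 1) * real (m + 2))) * real (m - j + 1)"
  unfolding T_def by (simp only: divide_inverse mult_ac)

lemma sum_T: "(\<Sum>j\<le>m. T m j) = 1"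
proof -
  have "(\<Sum>j\<le>m. T m j) = (2 / (real (m + 1) * real (m + 2))) * real (\<Sum>j\<le>m. m - j + 1)"
    by (simp only: T_split sum_distrib_left of_nat_sum)
  also have "real (\<Sum>j\<le>m. m - j + 1) = real (m+1) * real (m+2) / 2"
  proof -
    have "real (2 * (\<Sum>j\<le>m. m - j + 1)) = real ((m+1)*(m+2))" using sumT_nat[of m] by (simp only:)
    then show ?thesis by (simp only: of_nat_mult)
  qed
  finally show ?thesis by simp
qed

lemma T_nonneg: "T m j \<ge> 0" by (simp add: T_def)

lemma alt_aux: "(\<Sum>j\<le>m. (-1)^j * real (m - j + 1)) = real (m div 2 + 1)"
proof (induct m)
  case 0 then show ?case by simp
next
  case (Suc m)
  have "(\<Sum>j\<le>Suc m. (-1)^j * real (Suc m - j + 1)) =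
        real (Suc m + 1) + (\<Sum>j\<le>m. (-1)^(Suc j) * real (Suc m - Suc j + 1))"
    by (subst sum.atMost_Suc_shift) simp
  also have "(\<Sum>j\<le>m. (-1)^(Suc j) * real (Suc m - Suc j + 1)) = - (\<Sum>j\<le>m. (-1)^j * real (m - j + 1))"
    by (simp only: sum_negf[symmetric] diff_Suc_Suc power_Suc mult_minus1 minus_mult_left)
  also have "\<dots> = - real (m div 2 + 1)" using Suc by simp
  also have "real (Suc m + 1) + - real (m div 2 + 1) = real (Suc m div 2 + 1)"
  proof -
    have "Suc m + 1 = (m div 2 + 1) + (Suc m div 2 + 1)" by presburger
    then have "real (Suc m + 1) = real (m div 2 + 1) + real (Suc m div 2 + 1)" by (simp only: of_nat_add[symmetric])
    then show ?thesis by linarith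
  qed
  finally show ?case .
qed

lemma c_eq: "c m = 2 * real (m div 2 + 1) / (real (m+1) * real (m+2))"
proof -
  have "c m = (\<Sum>j\<le>m. (2 / (real (m + 1) * real (m + 2))) * ((-1)^j * real (m - j + 1)))"
    unfolding c_def by (intro sum.cong refl) (simp only: T_split mult_ac)
  also have "\<dots> = (2 / (real (m + 1) * real (m + 2))) * (\<Sum>j\<le>m. (-1)^j * real (m - j + 1))"
    by (rule sum_distrib_left[symmetric])
  finally have "c m = (2 / (real (m + 1) * real (m + 2))) * (\<Sum>j\<le>m. (-1)^j * real (m - j + 1))" .
  then show ?thesis unfolding alt_aux by simp
qed

lemma c_pos: "c m > 0" by (simp add: c_eq)

definition sg :: "nat \<Rightarrow> real" where "sg m = 1 / c m"

lemma sg_ge1: "sg m \<ge> 1"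
proof -
  have "2 * real (m div 2 + 1) \<le> real (m+1) * real (m+2)"
  proof -
    have "2 * (m div 2 + 1) \<le> m + 2" by presburger
    also have "m + 2 \<le> (m+1)*(m+2)" by simp
    finally show ?thesis by (metis of_nat_le_iff of_nat_mult of_nat_numeral)
  qed
  then show ?thesis by (simp add: sg_def c_eq)
qed

lemma sg_le: "sg m \<le> real m + 2"
proof -
  have "m+1 \<le> 2 * (m div 2 + 1)" by presburger
  then have h: "real (m+1) \<le> 2 * real (m div 2 + 1)" by (metis of_nat_le_iff of_nat_mult of_nat_numeral)
  have "sg m = real (m+1) * real (m+2) / (2 * real (m div 2 + 1))"
    by (simp add: sg_def c_eq)
  also have "\<dots> \<le> real (m+1) * real (m+2) / real (m+1)"
    by (rule divide_left_mono[OF h]) auto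
  also have "\<dots> = real m + 2" by simp
  finally show ?thesis .
qed

lemma sg_pos: "sg m > 0" using sg_ge1[of m] by simp

lemma P_rq: "P n (rq t) = rq (sg n * t ^ n)"
proof -
  have "P n (rq t) = (1 / c n) *\<^sub>R (\<Sum>j\<le>n. rq (T n j * t ^ n))"
    unfolding P_def
    by (intro arg_cong[where f="\<lambda>z. (1 / c n) *\<^sub>R z"] sum.cong refl)
       (simp add: qpow_rq qmul_rq_left rq_scaleR power_add[symmetric])
  also have "\<dots> = rq (sg n * t ^ n)"
    by (simp add: rq_sum rq_scaleR sum_distrib_right[symmetric] sum_T sg_def)
  finally show ?thesis .
qed

lemma norm_P: "norm (P n x) \<le> sg n * norm x ^ n"
proof -
  have "norm (P n x) = (1 / c n) * norm (\<Sum>j\<le>n. T n j *\<^sub>R qmul (qpow x (n - j)) (qpow (qcnj x) j))"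
    using c_pos[of n] by (simp add: P_def)
  also have "\<dots> \<le> (1 / c n) * (\<Sum>j\<le>n. T n j * norm x ^ n)"
  proof -
    have "norm (\<Sum>j\<le>n. T n j *\<^sub>R qmul (qpow x (n - j)) (qpow (qcnj x) j)) \<le>
          (\<Sum>j\<le>n. norm (T n j *\<^sub>R qmul (qpow x (n - j)) (qpow (qcnj x) j)))"
      by (rule norm_sum)
    also have "\<dots> = (\<Sum>j\<le>n. T n j * norm x ^ n)"
      by (intro sum.cong refl) (simp add: norm_qmul norm_qpow T_nonneg power_add[symmetric])
    finally show ?thesis using c_pos[of n] by (simp add: divide_right_mono)
  qed
  also have "\<dots> = sg n * norm x ^ n"
    by (simp add: sum_distrib_right[symmetric] sum_T sg_def)
  finally show ?thesis .
qed


definition qv :: "quat \<Rightarrow> quat^'r \<Rightarrow> quat^'r" where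
  "qv q v = (\<chi> a. qmul q (v $ a))"
definition adj :: "quat^'s^'r \<Rightarrow> quat^'r \<Rightarrow> quat^'s" where
  "adj A u = (\<chi> c. \<Sum>b\<in>UNIV. qmul (qcnj (A $ b $ c)) (u $ b))"
definition qdot :: "quat^'r \<Rightarrow> quat^'r \<Rightarrow> quat" where
  "qdot u v = (\<Sum>a\<in>UNIV. qmul (qcnj (u $ a)) (v $ a))"

lemma norm_vec_sq: "(norm (u::'a::real_normed_vector^'n))^2 = (\<Sum>a\<in>UNIV. (norm (u $ a))^2)"
  by (simp add: norm_vec_def L2_set_def sum_nonneg)

lemma qdot_self: "qdot u u = rq ((norm u)^2)"
  by (simp add: qdot_def qmul_cnj_self rq_sum norm_vec_sq)

lemma qdot_sum_left: "qdot (sum f A) v = (\<Sum>i\<in>A. qdot (f i) v)"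
  unfolding qdot_def
  by (simp add: sum_component qcnj_sum qmul_sum_left) (rule sum.swap)

lemma qdot_sum_right: "qdot u (sum f A) = (\<Sum>i\<in>A. qdot u (f i))"
  unfolding qdot_def
  by (simp add: sum_component qmul_sum_right) (rule sum.swap)

lemma qhform_qsmat_id:
  "qhform u (qsmat (qmul p (qcnj p')) qmat_id) v = qdot (qv (qcnj p) u) (qv (qcnj p') v)"
proof -
  have "qhform u (qsmat (qmul p (qcnj p')) qmat_id) v =
        (\<Sum>a\<in>UNIV. qmul (qmul (qcnj (u $ a)) (qmul p (qcnj p'))) (v $ a))"
    unfolding qhform_def qsmat_def qmat_id_def
    by (simp add: if_distrib[where f="qmul _"] if_distrib[where f="\<lambda>z. qmul z _"] cong: if_cong)
  also have "\<dots> = qdot (qv (qcnj p) u) (qv (qcnj p') v)"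
    unfolding qdot_def qv_def by (simp add: qcnj_qmul qmul_assoc)
  finally show ?thesis .
qed

lemma qhform_matmul:
  "qhform u (qmatmul A (qctrans B)) v = qdot (adj A u) (adj B v)"
proof -
  have "qhform u (qmatmul A (qctrans B)) v =
     (\<Sum>a\<in>UNIV. \<Sum>b\<in>UNIV. \<Sum>c\<in>UNIV. qmul (qmul (qcnj (u $ a)) (A $ a $ c)) (qmul (qcnj (B $ b $ c)) (v $ b)))"
    unfolding qhform_def qmatmul_def qctrans_def
    by (simp add: qmul_sum_left qmul_sum_right qmul_assoc)
  also have "\<dots> = (\<Sum>c\<in>UNIV. \<Sum>a\<in>UNIV. \<Sum>b\<in>UNIV. qmul (qmul (qcnj (u $ a)) (A $ a $ c)) (qmul (qcnj (B $ b $ c)) (v $ b)))"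
    apply (subst sum.swap)
    apply (rule sum.swap)
    done
  also have "\<dots> = qdot (adj A u) (adj B v)"
    unfolding qdot_def adj_def
    apply (simp add: qcnj_sum qcnj_qmul qmul_sum_left qmul_sum_right)
    apply (rule sum.cong[OF refl])
    apply (rule sum.swap)
    done
  finally show ?thesis .
qed

lemma qhform_diff: "qhform u (A - B) v = qhform u A v - qhform u B v"
  by (simp add: qhform_def qmul_diff_left qmul_diff_right sum_subtractf)

lemma qhform_linear: "linear (\<lambda>A. qhform u A v)"
  by (rule linearI)
     (simp_all add: qhform_def qmul_add_left qmul_add_right sum.distrib qmul_scaleR_left
       qmul_scaleR_right scaleR_sum_right)

lemma qhform_bl: "bounded_linear (\<lambda>A. qhform u A v)"
  using qhform_linear linear_conv_bounded_linear by blast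

lemma adj_linear: "linear (\<lambda>A. adj A u)"
  by (rule linearI)
     (simp_all add: adj_def qmul_add_left sum.distrib qmul_scaleR_left qcnj_scaleR
       scaleR_sum_right vec_eq_iff)

lemma adj_bl: "bounded_linear (\<lambda>A. adj A u)"
  using adj_linear linear_conv_bounded_linear by blast

lemma adj_add_right: "adj A (u + v) = adj A u + adj A v"
  by (simp add: adj_def qmul_add_right sum.distrib vec_eq_iff)
lemma adj_zero_right[simp]: "adj A 0 = 0"
  by (simp add: adj_def vec_eq_iff)
lemma adj_sum_right: "adj A (sum f I) = (\<Sum>i\<in>I. adj A (f i))"
  by (induct I rule: infinite_finite_induct) (auto simp: adj_add_right)
lemma adj_scaleR_right: "adj A (r *\<^sub>R u) = r *\<^sub>R adj A u"
  by (simp add: adj_def qmul_scaleR_right scaleR_sum_right vec_eq_iff)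

lemma adj_qsmat: "adj (qsmat p A) u = adj A (qv (qcnj p) u)"
  by (simp add: adj_def qsmat_def qv_def qcnj_qmul qmul_assoc)

lemma qv_add: "qv p (u + v) = qv p u + qv p v"
  by (simp add: qv_def qmul_add_right vec_eq_iff)
lemma qv_zero[simp]: "qv p 0 = 0" by (simp add: qv_def vec_eq_iff)
lemma qv_sum: "qv p (sum f I) = (\<Sum>i\<in>I. qv p (f i))"
  by (induct I rule: infinite_finite_induct) (auto simp: qv_add)
lemma qv_rq: "qv (rq t) u = t *\<^sub>R u"
  by (simp add: qv_def qmul_rq_left vec_eq_iff)
lemma qsmat_rq: "qsmat (rq t) A = t *\<^sub>R A"
  by (simp add: qsmat_def qmul_rq_left vec_eq_iff)

lemma norm_qv: "norm (qv p u) = norm p * norm u"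
proof -
  have "(norm (qv p u))^2 = (norm p * norm u)^2"
    by (simp add: norm_vec_sq qv_def norm_qmul power_mult_distrib sum_distrib_left)
  then show ?thesis by (simp add: power2_eq_iff_nonneg)
qed

lemma norm_qsmat: "norm (qsmat p A) = norm p * norm A"
proof -
  have "(norm (qsmat p A))^2 = (norm p * norm A)^2"
    by (simp add: norm_vec_sq qsmat_def norm_qmul power_mult_distrib sum_distrib_left)
  then show ?thesis by (simp add: power2_eq_iff_nonneg)
qed

lemma norm_vec_le_sum: "norm (x::'a::real_normed_vector^'n) \<le> (\<Sum>i\<in>UNIV. norm (x $ i))"
  unfolding norm_vec_def by (rule L2_set_le_sum) simp

lemma norm_adj: "norm (adj (A::quat^'s^'r) u) \<le> real (CARD('s) * CARD('r)) * norm A * norm u"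
proof -
  have "norm (adj A u) \<le> (\<Sum>c\<in>UNIV. norm ((adj A u) $ c))" by (rule norm_vec_le_sum)
  also have "\<dots> \<le> (\<Sum>c\<in>(UNIV::'s set). \<Sum>b\<in>(UNIV::'r set). norm A * norm u)"
  proof (rule sum_mono)
    fix c
    have "norm ((adj A u) $ c) \<le> (\<Sum>b\<in>UNIV. norm (qmul (qcnj (A $ b $ c)) (u $ b)))"
      unfolding adj_def by (simp add: norm_sum)
    also have "\<dots> \<le> (\<Sum>b\<in>(UNIV::'r set). norm A * norm u)"
    proof (rule sum_mono)
      fix b
      have "norm (A $ b $ c) \<le> norm (A $ b)" by (rule Finite_Cartesian_Product.norm_nth_le)
      also have "\<dots> \<le> norm A" by (rule Finite_Cartesian_Product.norm_nth_le)
      finally have "norm (A $ b $ c) \<le> norm A" .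
      moreover have "norm (u $ b) \<le> norm u" by (rule Finite_Cartesian_Product.norm_nth_le)
      ultimately show "norm (qmul (qcnj (A $ b $ c)) (u $ b)) \<le> norm A * norm u"
        by (simp add: norm_qmul mult_mono)
    qed
    finally show "norm ((adj A u) $ c) \<le> (\<Sum>b\<in>(UNIV::'r set). norm A * norm u)" .
  qed
  also have "\<dots> = real (CARD('s) * CARD('r)) * norm A * norm u" by simp
  finally show ?thesis .
qed

lemma norm_qmatmul: "norm (qmatmul (A::quat^'s^'r) (B::quat^'t^'s)) \<le> real (CARD('r) * CARD('t) * CARD('s)) * norm A * norm B"
proof -
  have "norm (qmatmul A B) \<le> (\<Sum>i\<in>UNIV. norm ((qmatmul A B) $ i))" by (rule norm_vec_le_sum)
  also have "\<dots> \<le> (\<Sum>i\<in>(UNIV::'r set). \<Sum>k\<in>(UNIV::'t set). \<Sum>j\<in>(UNIV::'s set). norm A * norm B)"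
  proof (rule sum_mono)
    fix i
    have "norm ((qmatmul A B) $ i) \<le> (\<Sum>k\<in>UNIV. norm ((qmatmul A B) $ i $ k))" by (rule norm_vec_le_sum)
    also have "\<dots> \<le> (\<Sum>k\<in>(UNIV::'t set). \<Sum>j\<in>(UNIV::'s set). norm A * norm B)"
    proof (rule sum_mono)
      fix k
      have "norm ((qmatmul A B) $ i $ k) \<le> (\<Sum>j\<in>UNIV. norm (qmul (A $ i $ j) (B $ j $ k)))"
        unfolding qmatmul_def by (simp add: norm_sum)
      also have "\<dots> \<le> (\<Sum>j\<in>(UNIV::'s set). norm A * norm B)"
      proof (rule sum_mono)
        fix j
        have "norm (A $ i $ j) \<le> norm (A $ i)" by (rule Finite_Cartesian_Product.norm_nth_le)
        also have "\<dots> \<le> norm A" by (rule Finite_Cartesian_Product.norm_nth_le)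
        finally have "norm (A $ i $ j) \<le> norm A" .
        moreover have "norm (B $ j $ k) \<le> norm B" by (rule order_trans[OF Finite_Cartesian_Product.norm_nth_le Finite_Cartesian_Product.norm_nth_le])
        ultimately show "norm (qmul (A $ i $ j) (B $ j $ k)) \<le> norm A * norm B"
          by (simp add: norm_qmul mult_mono)
      qed
      finally show "norm ((qmatmul A B) $ i $ k) \<le> (\<Sum>j\<in>(UNIV::'s set). norm A * norm B)" .
    qed
    finally show "norm ((qmatmul A B) $ i) \<le> (\<Sum>k\<in>(UNIV::'t set). \<Sum>j\<in>(UNIV::'s set). norm A * norm B)" .
  qed
  also have "\<dots> = real (CARD('r) * CARD('t) * CARD('s)) * norm A * norm B" by simp
  finally show ?thesis .
qed


lemma rq_scaleR_qone: "rq t = t *\<^sub>R qone"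
  by (simp add: rq_def qone_def scaleR_prod_def scaleR_conv_of_real)

lemma qnonneg_rq: "qnonneg (rq t) \<longleftrightarrow> t \<ge> 0"
  by (simp add: qnonneg_def rq_def x0_def x1_def x2_def x3_def)

lemma bl_re: "bounded_linear (\<lambda>q::quat. Re (fst q))"
  using bounded_linear_compose[OF bounded_linear_Re bounded_linear_fst] by (simp add: o_def)

lemma re_rq[simp]: "Re (fst (rq t)) = t" by (simp add: rq_def)

lemma summable_rq_iff: "summable (\<lambda>n. rq (f n)) \<Longrightarrow> summable f \<and> suminf (\<lambda>n. rq (f n)) = rq (suminf f)"
proof -
  assume h: "summable (\<lambda>n. rq (f n))"
  have "summable (\<lambda>n. Re (fst (rq (f n))))" by (rule bounded_linear.summable[OF bl_re h])
  then have sf: "summable f" by simp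
  have "suminf (\<lambda>n. rq (f n)) = suminf (\<lambda>n. f n *\<^sub>R qone)" by (simp add: rq_scaleR_qone)
  also have "\<dots> = suminf f *\<^sub>R qone" by (rule suminf_scaleR_left[OF sf, symmetric])
  finally show ?thesis using sf by (simp add: rq_scaleR_qone)
qed

lemma qdot_sums: "qdot (sum f A) (sum g B) = (\<Sum>i\<in>A. \<Sum>j\<in>B. qdot (f i) (g j))"
  by (subst qdot_sum_left) (simp add: qdot_sum_right)

lemma Kterm_form:
  fixes s :: "nat \<Rightarrow> quat^'s^'r"
  shows "(\<Sum>i<k. \<Sum>j<k. qhform (u i) (K_term s n (y i) (y j)) (u j)) =
    rq ((norm (\<Sum>j<k. qv (qcnj (P n (y j))) (u j)))^2 - (norm (\<Sum>j<k. adj (ck s n (y j)) (u j)))^2)"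
proof -
  have "(\<Sum>i<k. \<Sum>j<k. qhform (u i) (K_term s n (y i) (y j)) (u j)) =
     (\<Sum>i<k. \<Sum>j<k. qdot (qv (qcnj (P n (y i))) (u i)) (qv (qcnj (P n (y j))) (u j)))
     - (\<Sum>i<k. \<Sum>j<k. qdot (adj (ck s n (y i)) (u i)) (adj (ck s n (y j)) (u j)))"
    by (simp add: K_term_def qhform_diff qhform_qsmat_id qhform_matmul sum_subtractf)
  also have "\<dots> = qdot (\<Sum>j<k. qv (qcnj (P n (y j))) (u j)) (\<Sum>j<k. qv (qcnj (P n (y j))) (u j))
      - qdot (\<Sum>j<k. adj (ck s n (y j)) (u j)) (\<Sum>j<k. adj (ck s n (y j)) (u j))"
    by (simp only: qdot_sums)
  also have "\<dots> = rq ((norm (\<Sum>j<k. qv (qcnj (P n (y j))) (u j)))^2 - (norm (\<Sum>j<k. adj (ck s n (y j)) (u j)))^2)"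
    by (simp add: qdot_self rq_def)
  finally show ?thesis .
qed

lemma ck_adj:
  fixes s :: "nat \<Rightarrow> quat^'s^'r"
  assumes "\<forall>i<k. summable (ck_term s n (y i))"
  shows "summable (\<lambda>m. adj (s m) (\<Sum>j<k. qv (qcnj (P (n+m) (y j))) (u j)))"
    and "(\<Sum>j<k. adj (ck s n (y j)) (u j)) = (\<Sum>m. adj (s m) (\<Sum>j<k. qv (qcnj (P (n+m) (y j))) (u j)))"
proof -
  have e: "adj (s m) (\<Sum>j<k. qv (qcnj (P (n+m) (y j))) (u j)) = (\<Sum>j<k. adj (ck_term s n (y j) m) (u j))" for m
    by (simp add: adj_sum_right ck_term_def adj_qsmat)
  have sj: "summable (\<lambda>m. adj (ck_term s n (y j) m) (u j))" if "j < k" for j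
    using bounded_linear.summable[OF adj_bl, of "ck_term s n (y j)" "u j"] assms that by simp
  show "summable (\<lambda>m. adj (s m) (\<Sum>j<k. qv (qcnj (P (n+m) (y j))) (u j)))"
    unfolding e by (rule summable_sum) (use sj in auto)
  have "(\<Sum>j<k. adj (ck s n (y j)) (u j)) = (\<Sum>j<k. \<Sum>m. adj (ck_term s n (y j) m) (u j))"
    unfolding ck_def using assms
    by (intro sum.cong refl) (simp add: bounded_linear.suminf[OF adj_bl])
  also have "\<dots> = (\<Sum>m. \<Sum>j<k. adj (ck_term s n (y j) m) (u j))"
    by (rule suminf_sum[symmetric]) (use sj in auto)
  finally show "(\<Sum>j<k. adj (ck s n (y j)) (u j)) = (\<Sum>m. adj (s m) (\<Sum>j<k. qv (qcnj (P (n+m) (y j))) (u j)))"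
    unfolding e .
qed

lemma KS_form:
  fixes s :: "nat \<Rightarrow> quat^'s^'r" and u :: "nat \<Rightarrow> quat^'r" and y :: "nat \<Rightarrow> quat" and k :: nat
  assumes hK: "\<forall>i<k. \<forall>j<k. summable (\<lambda>n. K_term s n (y i) (y j))"
  defines "f \<equiv> \<lambda>n. (norm (\<Sum>j<k. qv (qcnj (P n (y j))) (u j)))^2 - (norm (\<Sum>j<k. adj (ck s n (y j)) (u j)))^2"
  shows "summable f"
    and "(\<Sum>i<k. \<Sum>j<k. qhform (u i) (KS s (y i) (y j)) (u j)) = rq (suminf f)"
proof -
  have sm: "summable (\<lambda>n. qhform (u i) (K_term s n (y i) (y j)) (u j))" if "i<k" "j<k" for i j
    using bounded_linear.summable[OF qhform_bl, of "\<lambda>n. K_term s n (y i) (y j)"] hK that by auto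
  have "(\<Sum>i<k. \<Sum>j<k. qhform (u i) (KS s (y i) (y j)) (u j)) =
        (\<Sum>i<k. \<Sum>j<k. \<Sum>n. qhform (u i) (K_term s n (y i) (y j)) (u j))"
    unfolding KS_def using hK
    by (intro sum.cong refl) (simp add: bounded_linear.suminf[OF qhform_bl])
  also have "\<dots> = (\<Sum>i<k. \<Sum>n. \<Sum>j<k. qhform (u i) (K_term s n (y i) (y j)) (u j))"
    by (intro sum.cong refl suminf_sum[symmetric]) (use sm in auto)
  also have "\<dots> = (\<Sum>n. \<Sum>i<k. \<Sum>j<k. qhform (u i) (K_term s n (y i) (y j)) (u j))"
    by (intro suminf_sum[symmetric] summable_sum) (use sm in auto)
  also have "\<dots> = (\<Sum>n. rq (f n))" by (simp add: Kterm_form f_def)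
  finally have eq: "(\<Sum>i<k. \<Sum>j<k. qhform (u i) (KS s (y i) (y j)) (u j)) = (\<Sum>n. rq (f n))" .
  have "summable (\<lambda>n. \<Sum>i<k. \<Sum>j<k. qhform (u i) (K_term s n (y i) (y j)) (u j))"
    by (intro summable_sum) (use sm in auto)
  then have "summable (\<lambda>n. rq (f n))" by (simp add: Kterm_form f_def)
  from summable_rq_iff[OF this] eq
  show "summable f" "(\<Sum>i<k. \<Sum>j<k. qhform (u i) (KS s (y i) (y j)) (u j)) = rq (suminf f)" by auto
qed


definition FC :: "(nat \<Rightarrow> quat^'s^'r) \<Rightarrow> bool" where
  "FC s \<longleftrightarrow> (\<forall>L (v :: nat \<Rightarrow> quat^'r).
      (\<Sum>n\<le>L. (norm (\<Sum>m\<le>L-n. adj (s m) (v (n+m))))^2) \<le> (\<Sum>n\<le>L. (norm (v n))^2))"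

lemma contr_inf:
  fixes s :: "nat \<Rightarrow> quat^'s^'r" and w :: "nat \<Rightarrow> quat^'r"
  assumes fc: "FC s" and sw: "summable (\<lambda>n. (norm (w n))^2)"
    and sz: "\<And>n. summable (\<lambda>m. adj (s m) (w (n+m)))"
  shows "summable (\<lambda>n. (norm (\<Sum>m. adj (s m) (w (n+m))))^2)"
    and "(\<Sum>n. (norm (\<Sum>m. adj (s m) (w (n+m))))^2) \<le> (\<Sum>n. (norm (w n))^2)"
proof -
  define Z where "Z n = (\<Sum>m. adj (s m) (w (n+m)))" for n
  define S where "S = (\<Sum>n. (norm (w n))^2)"
  have part: "(\<Sum>n\<le>N. (norm (Z n))^2) \<le> S" for N
  proof -
    define g where "g L = (\<Sum>n\<le>N. (norm (\<Sum>m\<le>L-n. adj (s m) (w (n+m))))^2)" for L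
    have lim: "g \<longlonglongrightarrow> (\<Sum>n\<le>N. (norm (Z n))^2)"
      unfolding g_def
    proof (intro tendsto_sum tendsto_power tendsto_norm)
      fix n
      have "(\<lambda>M. \<Sum>m\<le>M. adj (s m) (w (n+m))) \<longlonglongrightarrow> Z n"
        unfolding Z_def by (rule summable_LIMSEQ'[OF sz])
      then show "(\<lambda>L. \<Sum>m\<le>L-n. adj (s m) (w (n+m))) \<longlonglongrightarrow> Z n"
        by (rule filterlim_compose[OF _ filterlim_minus_const_nat_at_top])
    qed
    have ev: "\<forall>\<^sub>F L in sequentially. g L \<le> S"
    proof (rule eventually_sequentiallyI[of N])
      fix L assume "N \<le> L"
      have "g L \<le> (\<Sum>n\<le>L. (norm (\<Sum>m\<le>L-n. adj (s m) (w (n+m))))^2)"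
        unfolding g_def by (rule sum_mono2) (use \<open>N \<le> L\<close> in auto)
      also have "\<dots> \<le> (\<Sum>n\<le>L. (norm (w n))^2)"
        using fc unfolding FC_def by blast
      also have "\<dots> \<le> S"
        unfolding S_def by (rule sum_le_suminf[OF sw]) auto
      finally show "g L \<le> S" .
    qed
    show ?thesis by (rule tendsto_le[OF _ tendsto_const lim ev]) simp
  qed
  show sZ: "summable (\<lambda>n. (norm (\<Sum>m. adj (s m) (w (n+m))))^2)"
    using bounded_imp_summable[of "\<lambda>n. (norm (Z n))^2" S] part by (simp add: Z_def)
  show "(\<Sum>n. (norm (\<Sum>m. adj (s m) (w (n+m))))^2) \<le> (\<Sum>n. (norm (w n))^2)"
  proof (rule suminf_le_const[OF sZ])
    fix n
    show "(\<Sum>i<n. (norm (\<Sum>m. adj (s m) (w (i+m))))^2) \<le> (\<Sum>n. (norm (w n))^2)"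
    proof (cases n)
      case 0 then show ?thesis using suminf_nonneg[OF sw] by simp
    next
      case (Suc n')
      have "{..<n} = {..n'}" using Suc by auto
      then show ?thesis using part[of n'] by (simp add: Z_def S_def)
    qed
  qed
qed


lemma lagrange_exists:
  fixes L :: nat
  defines "\<tau> \<equiv> \<lambda>i. real i / real (L+1)"
  shows "\<exists>lam :: nat \<Rightarrow> nat \<Rightarrow> real. \<forall>n\<le>L. \<forall>p\<le>L.
           (\<Sum>i\<le>L. (\<tau> i)^n * lam i p) = (if n = p then 1 else 0)"
proof -
  have inj: "\<tau> i = \<tau> j \<longleftrightarrow> i = j" for i j
    by (simp add: \<tau>_def divide_cancel_right)
  define l :: "nat \<Rightarrow> real poly" where
    "l i = smult (1 / (\<Prod>j\<in>{..L}-{i}. (\<tau> i - \<tau> j))) (\<Prod>j\<in>{..L}-{i}. [:-\<tau> j, 1:])" for i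
  have degl: "degree (l i) \<le> L" if "i \<le> L" for i
  proof -
    have "degree (l i) \<le> degree (\<Prod>j\<in>{..L}-{i}. [:-\<tau> j, 1:])"
      unfolding l_def by (rule degree_smult_le)
    also have "\<dots> \<le> (\<Sum>j\<in>{..L}-{i}. degree [:-\<tau> j, 1:])"
      using degree_prod_sum_le[of "{..L}-{i}" "\<lambda>j. [:-\<tau> j, 1:]"] by (simp add: o_def)
    also have "\<dots> \<le> (\<Sum>j\<in>{..L}-{i}. 1)" by (intro sum_mono) simp
    also have "\<dots> \<le> L" using that by (simp add: card_Diff_singleton)
    finally show ?thesis .
  qed
  have pl: "poly (l i) (\<tau> q) = (if q = i then 1 else 0)" if "i \<le> L" "q \<le> L" for i q
  proof (cases "q = i")
    case True
    have "(\<Prod>j\<in>{..L}-{i}. (\<tau> i - \<tau> j)) \<noteq> 0"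
      by (subst prod_zero_iff) (auto simp: inj)
    then show ?thesis using True by (simp add: l_def poly_prod)
  next
    case False
    have "(\<Prod>j\<in>{..L}-{i}. poly [:-\<tau> j, 1:] (\<tau> q)) = 0"
      by (rule prod_zero) (use that False in \<open>auto intro!: bexI[of _ q]\<close>)
    then show ?thesis using False by (simp add: l_def poly_prod)
  qed
  define lam where "lam i p = coeff (l i) p" for i p
  have "(\<Sum>i\<le>L. (\<tau> i)^n * lam i p) = (if n = p then 1 else 0)" if "n \<le> L" "p \<le> L" for n p
  proof -
    have eqp: "monom 1 n = (\<Sum>i\<le>L. smult ((\<tau> i)^n) (l i))"
    proof (rule poly_eqI_degree[of "\<tau> ` {..L}"])
      fix x assume "x \<in> \<tau> ` {..L}"
      then obtain q where q: "q \<le> L" "x = \<tau> q" by auto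
      have "poly (\<Sum>i\<le>L. smult ((\<tau> i)^n) (l i)) x = (\<Sum>i\<le>L. (\<tau> i)^n * (if q = i then 1 else 0))"
        using q by (simp add: poly_sum pl)
      also have "\<dots> = (\<tau> q)^n" using q by (simp add: if_distrib[where f="\<lambda>z. _ * z"] cong: if_cong)
      finally show "poly (monom 1 n) x = poly (\<Sum>i\<le>L. smult ((\<tau> i)^n) (l i)) x"
        using q by (simp add: poly_monom)
    next
      have "card (\<tau> ` {..L}) = L + 1"
        by (subst card_image) (auto simp: inj_on_def inj)
      then show "degree (monom (1::real) n) < card (\<tau> ` {..L})" using that by (simp add: degree_monom_eq)
      have "degree (\<Sum>i\<le>L. smult ((\<tau> i)^n) (l i)) \<le> L"
        by (rule degree_sum_le) (auto intro: order_trans[OF degree_smult_le] degl)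
      then show "degree (\<Sum>i\<le>L. smult ((\<tau> i)^n) (l i)) < card (\<tau> ` {..L})"
        using \<open>card (\<tau> ` {..L}) = L + 1\<close> by simp
    qed
    have "coeff (monom 1 n) p = coeff (\<Sum>i\<le>L. smult ((\<tau> i)^n) (l i)) p" using eqp by simp
    then show ?thesis by (simp add: coeff_sum lam_def coeff_monom)
  qed
  then show ?thesis by blast
qed


lemma summable_polygeo:
  fixes q :: real
  assumes "0 \<le> q" "q < 1"
  shows "summable (\<lambda>n. (real n + 1)^k * q^n)"
  using assms
proof (induct k arbitrary: q)
  case 0 then show ?case by (simp add: summable_geometric)
next
  case (Suc k)
  define \<theta> where "\<theta> = sqrt q"
  have th: "0 \<le> \<theta>" "\<theta> < 1" "\<theta> * \<theta> = q" using Suc.prems by (auto simp: \<theta>_def)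
  have "(\<lambda>n. of_nat n * \<theta> ^ n) \<longlonglongrightarrow> 0" by (rule powser_times_n_limit_0) (use th in simp)
  then have "Bseq (\<lambda>n. of_nat n * \<theta> ^ n)" by (intro convergent_imp_Bseq convergentI)
  then obtain K where K: "K > 0" "\<And>n. norm (of_nat n * \<theta> ^ n) \<le> K" by (auto simp: Bseq_def)
  have b: "(real n + 1) * \<theta>^n \<le> K + 1" for n
  proof -
    have "real n * \<theta>^n \<le> K" using K(2)[of n] th by simp
    moreover have "\<theta>^n \<le> 1" using th by (simp add: power_le_one)
    ultimately show ?thesis by (simp add: distrib_right)
  qed
  have sIH: "summable (\<lambda>n. (K+1) * ((real n + 1)^k * \<theta>^n))"
    using Suc.hyps[of \<theta>] th by (intro summable_mult) auto
  show ?case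
  proof (rule summable_comparison_test'[OF sIH])
    fix n :: nat
    have "(real n + 1)^(Suc k) * q^n = ((real n + 1) * \<theta>^n) * ((real n + 1)^k * \<theta>^n)"
      using th by (simp add: power_mult_distrib[symmetric] mult_ac)
    also have "\<dots> \<le> (K+1) * ((real n + 1)^k * \<theta>^n)"
      by (rule mult_right_mono[OF b]) (use th in simp)
    finally show "norm ((real n + 1)^(Suc k) * q^n) \<le> (K+1) * ((real n + 1)^k * \<theta>^n)"
      using Suc.prems by simp
  qed
qed

lemma W_props:
  fixes v :: "nat \<Rightarrow> quat^'r" and u :: "nat \<Rightarrow> quat^'r" and W :: "nat \<Rightarrow> quat^'r" and L :: nat and lam :: "nat \<Rightarrow> nat \<Rightarrow> real" and \<epsilon> :: real
  assumes lam: "\<forall>n\<le>L. \<forall>p\<le>L. (\<Sum>i\<le>L. (real i / real (L+1))^n * lam i p) = (if n = p then 1 else 0)"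
    and e: "0 < \<epsilon>" "\<epsilon> \<le> 1"
    and uD: "u = (\<lambda>i. \<Sum>p\<le>L. (lam i p / (\<epsilon>^p * sg p)) *\<^sub>R v p)"
    and WD: "W = (\<lambda>n. \<Sum>i\<le>L. (sg n * (\<epsilon> * (real i / real (L+1)))^n) *\<^sub>R u i)"
  shows "\<And>n. n \<le> L \<Longrightarrow> W n = v n"
    and "\<And>n. norm (W n) \<le> (\<Sum>p\<le>L. \<Sum>i\<le>L. \<bar>lam i p\<bar> * norm (v p)) * (sg n * \<epsilon>^n / \<epsilon>^L)"
proof -
  define \<tau> where "\<tau> i = real i / real (L+1)" for i
  define cc where "cc n p = sg n * \<epsilon>^n / (\<epsilon>^p * sg p) * (\<Sum>i\<le>L. (\<tau> i)^n * lam i p)" for n p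
  have Weq: "W n = (\<Sum>p\<le>L. cc n p *\<^sub>R v p)" for n
  proof -
    have "W n = (\<Sum>i\<le>L. \<Sum>p\<le>L. (sg n * (\<epsilon> * \<tau> i)^n * (lam i p / (\<epsilon>^p * sg p))) *\<^sub>R v p)"
      unfolding WD uD \<tau>_def by (simp add: scaleR_sum_right)
    also have "\<dots> = (\<Sum>p\<le>L. \<Sum>i\<le>L. (sg n * (\<epsilon> * \<tau> i)^n * (lam i p / (\<epsilon>^p * sg p))) *\<^sub>R v p)"
      by (rule sum.swap)
    also have "\<dots> = (\<Sum>p\<le>L. cc n p *\<^sub>R v p)"
      unfolding cc_def scaleR_sum_left[symmetric]
      by (intro sum.cong refl arg_cong[where f="\<lambda>z. z *\<^sub>R _"])
         (simp add: sum_distrib_left sum_divide_distrib power_mult_distrib mult_ac)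
    finally show ?thesis .
  qed
  show "W n = v n" if "n \<le> L" for n
  proof -
    have "cc n p = (if p = n then 1 else 0)" if "p \<le> L" for p
      using lam \<open>n \<le> L\<close> that sg_pos[of n] e by (auto simp: cc_def \<tau>_def)
    then have "W n = (\<Sum>p\<le>L. (if p = n then v p else 0))"
      unfolding Weq by (intro sum.cong refl) auto
    then show ?thesis using that by simp
  qed
  show "norm (W n) \<le> (\<Sum>p\<le>L. \<Sum>i\<le>L. \<bar>lam i p\<bar> * norm (v p)) * (sg n * \<epsilon>^n / \<epsilon>^L)" for n
  proof -
    have "norm (W n) \<le> (\<Sum>p\<le>L. \<bar>cc n p\<bar> * norm (v p))"
      unfolding Weq by (rule order_trans[OF norm_sum]) simp
    also have "\<dots> \<le> (\<Sum>p\<le>L. ((\<Sum>i\<le>L. \<bar>lam i p\<bar>) * (sg n * \<epsilon>^n / \<epsilon>^L)) * norm (v p))"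
    proof (intro sum_mono mult_right_mono)
      fix p assume p: "p \<in> {..L}"
      have t1: "\<bar>\<Sum>i\<le>L. (\<tau> i)^n * lam i p\<bar> \<le> (\<Sum>i\<le>L. \<bar>lam i p\<bar>)"
      proof -
        have "\<bar>\<Sum>i\<le>L. (\<tau> i)^n * lam i p\<bar> \<le> (\<Sum>i\<le>L. \<bar>(\<tau> i)^n * lam i p\<bar>)" by (rule sum_abs)
        also have "\<dots> \<le> (\<Sum>i\<le>L. \<bar>lam i p\<bar>)"
        proof (rule sum_mono)
          fix i assume "i \<in> {..L}"
          then have "0 \<le> \<tau> i" "\<tau> i \<le> 1" by (auto simp: \<tau>_def)
          then have "\<bar>(\<tau> i)^n\<bar> \<le> 1" by (simp add: power_le_one)
          then show "\<bar>(\<tau> i)^n * lam i p\<bar> \<le> \<bar>lam i p\<bar>"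
            by (simp add: abs_mult mult_left_le_one_le)
        qed
        finally show ?thesis .
      qed
      have t2: "sg n * \<epsilon>^n / (\<epsilon>^p * sg p) \<le> sg n * \<epsilon>^n / \<epsilon>^L"
      proof (rule divide_left_mono)
        have "\<epsilon>^L \<le> \<epsilon>^p" using p e by (intro power_decreasing) auto
        also have "\<dots> \<le> \<epsilon>^p * sg p" using sg_ge1[of p] e by simp
        finally show "\<epsilon>^L \<le> \<epsilon>^p * sg p" .
        show "0 \<le> sg n * \<epsilon>^n" using sg_pos[of n] e by simp
        show "0 < \<epsilon>^p * sg p * \<epsilon>^L" using sg_pos[of p] e by simp
      qed
      have t3: "0 \<le> sg n * \<epsilon>^n / (\<epsilon>^p * sg p)" using sg_pos[of n] sg_pos[of p] e by simp
      have "\<bar>cc n p\<bar> = sg n * \<epsilon>^n / (\<epsilon>^p * sg p) * \<bar>\<Sum>i\<le>L. (\<tau> i)^n * lam i p\<bar>"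
      proof -
        have "\<bar>sg n * \<epsilon>^n / (\<epsilon>^p * sg p)\<bar> = sg n * \<epsilon>^n / (\<epsilon>^p * sg p)" using t3 by (simp only: abs_of_nonneg)
        then show ?thesis unfolding cc_def abs_mult by simp
      qed
      also have "\<dots> \<le> (sg n * \<epsilon>^n / \<epsilon>^L) * (\<Sum>i\<le>L. \<bar>lam i p\<bar>)"
        by (rule mult_mono[OF t2 t1]) (use sg_pos[of n] e in simp_all)
      finally show "\<bar>cc n p\<bar> \<le> (\<Sum>i\<le>L. \<bar>lam i p\<bar>) * (sg n * \<epsilon>^n / \<epsilon>^L)" by (simp add: mult_ac)
    qed simp
    also have "\<dots> = (\<Sum>p\<le>L. \<Sum>i\<le>L. \<bar>lam i p\<bar> * norm (v p)) * (sg n * \<epsilon>^n / \<epsilon>^L)"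
      by (simp add: sum_distrib_right sum_distrib_left sum_divide_distrib mult_ac)
    finally show ?thesis .
  qed
qed


lemma s_bound:
  fixes s :: "nat \<Rightarrow> quat^'s^'r"
  assumes "summable (\<lambda>m. qsmat (P m (rq R)) (s m))" "0 < R"
  obtains B where "B > 0" "\<And>m. norm (s m) \<le> B * (1/R)^m"
proof -
  have "(\<lambda>m. qsmat (P m (rq R)) (s m)) \<longlonglongrightarrow> 0" by (rule summable_LIMSEQ_zero[OF assms(1)])
  then have "Bseq (\<lambda>m. qsmat (P m (rq R)) (s m))" by (intro convergent_imp_Bseq convergentI)
  then obtain B where B: "B > 0" "\<And>m. norm (qsmat (P m (rq R)) (s m)) \<le> B" by (auto simp: Bseq_def)
  have "norm (s m) \<le> B * (1/R)^m" for m
  proof -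
    have "norm (qsmat (P m (rq R)) (s m)) = sg m * R^m * norm (s m)"
      using assms(2) sg_pos[of m] by (simp add: P_rq norm_qsmat abs_mult)
    then have h: "sg m * R^m * norm (s m) \<le> B" using B(2)[of m] by simp
    have "R^m * norm (s m) \<le> sg m * R^m * norm (s m)"
      using sg_ge1[of m] assms(2) by (simp add: mult_right_mono)
    then have "R^m * norm (s m) \<le> B" using h by linarith
    then show ?thesis using assms(2) by (simp add: field_simps power_divide)
  qed
  then show ?thesis using B(1) that by blast
qed

lemma rq_in:
  assumes "ball 0 \<delta> \<subseteq> N" "\<bar>t\<bar> < \<delta>"
  shows "rq t \<in> N"
  using assms by (auto simp: dist_norm)


lemma sq_mono: "0 \<le> (a::real) \<Longrightarrow> a \<le> b \<Longrightarrow> a^2 \<le> b^2"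
  by (rule power_mono) auto

lemma sg_le2: "sg n \<le> 2 * (real n + 1)" using sg_le[of n] by simp

lemma sg_shift: "sg (n + k) \<le> (real k + 2) * (real n + 1)"
proof -
  have "sg (n+k) \<le> real n + real k + 2" using sg_le[of "n+k"] by simp
  also have "\<dots> \<le> (real k + 2) * (real n + 1)" by (simp add: algebra_simps)
  finally show ?thesis .
qed

lemma claimA:
  fixes s :: "nat \<Rightarrow> quat^'s^'r" and v :: "nat \<Rightarrow> quat^'r" and u :: "nat \<Rightarrow> quat^'r" and W :: "nat \<Rightarrow> quat^'r"
  assumes kc: "kernel_converges s N" and pd: "pos_def_kernel (KS s) N"
    and ball: "ball 0 \<delta> \<subseteq> N"
    and lam: "\<forall>n\<le>L. \<forall>p\<le>L. (\<Sum>i\<le>L. (real i / real (L+1))^n * lam i p) = (if n = p then 1 else 0)"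
    and e: "0 < \<epsilon>" "\<epsilon> \<le> 1/4" "\<epsilon> < \<delta>"
    and uD: "u = (\<lambda>i. \<Sum>p\<le>L. (lam i p / (\<epsilon>^p * sg p)) *\<^sub>R v p)"
    and WD: "W = (\<lambda>n. \<Sum>i\<le>L. (sg n * (\<epsilon> * (real i / real (L+1)))^n) *\<^sub>R u i)"
  defines "G \<equiv> (\<Sum>p\<le>L. \<Sum>i\<le>L. \<bar>lam i p\<bar> * norm (v p))"
  shows "\<And>n. summable (\<lambda>m. adj (s m) (W (n+m)))"
    and "(\<Sum>n\<le>L. (norm (\<Sum>m. adj (s m) (W (n+m))))^2) \<le> (\<Sum>n\<le>L. (norm (v n))^2)
          + \<epsilon> * (G^2 * (real L + 3)^2 * (\<Sum>n. (real n + 1)^2 * (1/4)^n))"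
proof -
  have e1: "\<epsilon> \<le> 1" using e by simp
  note Wv = W_props(1)[OF lam e(1) e1 uD WD]
  note Wb = W_props(2)[OF lam e(1) e1 uD WD, folded G_def]
  have G0: "G \<ge> 0" unfolding G_def by (intro sum_nonneg) auto
  define y where "y i = rq (\<epsilon> * (real i / real (L+1)))" for i
  have yN: "y i \<in> N" if "i < Suc L" for i
    unfolding y_def
  proof (rule rq_in[OF ball])
    have "\<bar>\<epsilon> * (real i / real (L+1))\<bar> \<le> \<epsilon>"
    proof -
      have "real i \<le> real L + 1" using that by simp
      then have "\<epsilon> * real i \<le> \<epsilon> * (real L + 1)" using e by (intro mult_left_mono) auto
      then show ?thesis using e by (auto simp: abs_mult field_simps)
    qed
    then show "\<bar>\<epsilon> * (real i / real (L+1))\<bar> < \<delta>" using e by linarith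
  qed
  have kc1: "\<forall>x\<in>N. \<forall>n. summable (ck_term s n x)" and kc2: "\<forall>x\<in>N. \<forall>y\<in>N. summable (\<lambda>n. K_term s n x y)"
    using kc unfolding kernel_converges_def by auto
  have ck_s: "\<forall>i<Suc L. summable (ck_term s n (y i))" for n
    using kc1 yN by simp
  have K_s: "\<forall>i<Suc L. \<forall>j<Suc L. summable (\<lambda>n. K_term s n (y i) (y j))"
    using kc2 yN by simp
  have Wy: "(\<Sum>j<Suc L. qv (qcnj (P n (y j))) (u j)) = W n" for n
    unfolding WD lessThan_Suc_atMost
    by (intro sum.cong refl) (simp only: y_def P_rq qcnj_rq qv_rq)
  show sz: "summable (\<lambda>m. adj (s m) (W (n+m)))" for n
    using ck_adj(1)[OF ck_s[of n], of u] by (simp only: Wy)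
  have Zy: "(\<Sum>j<Suc L. adj (ck s n (y j)) (u j)) = (\<Sum>m. adj (s m) (W (n+m)))" for n
    using ck_adj(2)[OF ck_s[of n], of u] by (simp only: Wy)
  define f where "f n = (norm (\<Sum>j<Suc L. qv (qcnj (P n (y j))) (u j)))^2 - (norm (\<Sum>j<Suc L. adj (ck s n (y j)) (u j)))^2" for n
  note KF = KS_form[OF K_s, of u, folded f_def]
  have "qnonneg (\<Sum>i<Suc L. \<Sum>j<Suc L. qhform (u i) (KS s (y i) (y j)) (u j))"
    using pd yN unfolding pos_def_kernel_def by blast
  then have f0: "suminf f \<ge> 0" using KF(2) by (simp add: qnonneg_rq)
  define Z where "Z n = (\<Sum>m. adj (s m) (W (n+m)))" for n
  have fe: "f n = (norm (W n))^2 - (norm (Z n))^2" for n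
    unfolding f_def Wy Zy Z_def ..
  have e2: "\<epsilon>^2 < 1"
  proof -
    have "\<epsilon> * \<epsilon> \<le> \<epsilon> * 1" using e by (intro mult_left_mono) auto
    then have "\<epsilon> * \<epsilon> < 1" using e by linarith
    then show ?thesis by (simp add: power2_eq_square)
  qed
  have sW: "summable (\<lambda>n. (norm (W n))^2)"
  proof (rule summable_comparison_test'[where N=0])
    show "summable (\<lambda>n. (G / \<epsilon>^L)^2 * 4 * ((real n + 1)^2 * (\<epsilon>^2)^n))"
      using e e2 by (intro summable_mult summable_polygeo) auto
  next
    fix n :: nat
    have "norm (W n) \<le> G * (sg n * \<epsilon>^n / \<epsilon>^L)" by (rule Wb)
    also have "\<dots> \<le> G * (2 * (real n + 1) * \<epsilon>^n / \<epsilon>^L)"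
      using G0 e sg_le2[of n] by (intro mult_left_mono divide_right_mono mult_right_mono) auto
    finally have "(norm (W n))^2 \<le> (G * (2 * (real n + 1) * \<epsilon>^n / \<epsilon>^L))^2"
      by (intro sq_mono) auto
    also have "\<dots> = (G / \<epsilon>^L)^2 * 4 * ((real n + 1)^2 * (\<epsilon>^2)^n)"
      by (simp add: power_mult_distrib power_divide power_mult[symmetric] mult_ac) (simp add: power2_eq_square algebra_simps)
    finally show "norm ((norm (W n))^2) \<le> (G / \<epsilon>^L)^2 * 4 * ((real n + 1)^2 * (\<epsilon>^2)^n)" by simp
  qed
  have sZ: "summable (\<lambda>n. (norm (Z n))^2)"
  proof -
    have "summable (\<lambda>n. (norm (W n))^2 - f n)" by (intro summable_diff sW KF(1))
    then show ?thesis by (simp add: fe)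
  qed
  have "(\<Sum>n\<le>L. (norm (Z n))^2) \<le> (\<Sum>n. (norm (Z n))^2)"
    by (rule sum_le_suminf[OF sZ]) auto
  also have "(\<Sum>n. (norm (Z n))^2) = (\<Sum>n. (norm (W n))^2) - suminf f"
  proof -
    have fef: "f = (\<lambda>n. (norm (W n))^2 - (norm (Z n))^2)" using fe by auto
    show ?thesis using suminf_diff[OF sW KF(1)] by (simp add: fef)
  qed
  also have "\<dots> \<le> (\<Sum>n. (norm (W n))^2)" using f0 by simp
  also have "(\<Sum>n. (norm (W n))^2) = (\<Sum>n. (norm (W (n + Suc L)))^2) + (\<Sum>n<Suc L. (norm (W n))^2)"
    by (rule suminf_split_initial_segment[OF sW])
  also have "(\<Sum>n<Suc L. (norm (W n))^2) = (\<Sum>n\<le>L. (norm (v n))^2)"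
    unfolding lessThan_Suc_atMost by (intro sum.cong refl) (simp add: Wv)
  also have "(\<Sum>n. (norm (W (n + Suc L)))^2) \<le> \<epsilon> * (G^2 * (real L + 3)^2 * (\<Sum>n. (real n + 1)^2 * (1/4)^n))"
  proof -
    have sq: "summable (\<lambda>n. (real n + 1)^2 * (1/4::real)^n)" by (rule summable_polygeo) auto
    have b: "(norm (W (n + Suc L)))^2 \<le> \<epsilon> * (G^2 * (real L + 3)^2) * ((real n + 1)^2 * (1/4)^n)" for n
    proof -
      have "norm (W (n + Suc L)) \<le> G * (sg (n + Suc L) * \<epsilon>^(n + Suc L) / \<epsilon>^L)" by (rule Wb)
      also have "sg (n + Suc L) * \<epsilon>^(n + Suc L) / \<epsilon>^L = sg (n + Suc L) * \<epsilon>^(Suc n)"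
        using e by (simp add: power_add)
      also have "\<dots> \<le> ((real L + 3) * (real n + 1)) * \<epsilon>^(Suc n)"
        using sg_shift[of n "Suc L"] e by (intro mult_right_mono) (auto simp: add.commute)
      finally have "norm (W (n + Suc L)) \<le> G * (((real L + 3) * (real n + 1)) * \<epsilon>^(Suc n))"
        using G0 by (simp add: mult_left_mono)
      then have "(norm (W (n + Suc L)))^2 \<le> (G * (((real L + 3) * (real n + 1)) * \<epsilon>^(Suc n)))^2"
        by (intro sq_mono) auto
      also have "\<dots> = (G^2 * (real L + 3)^2) * (real n + 1)^2 * (\<epsilon> * (\<epsilon> * (\<epsilon>^2)^n))"
        by (simp add: power_mult_distrib power_mult[symmetric] mult_ac power2_eq_square)
      also have "\<dots> \<le> (G^2 * (real L + 3)^2) * (real n + 1)^2 * (\<epsilon> * (1/4)^n)"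
      proof -
        have "\<epsilon> * \<epsilon> \<le> \<epsilon> * 1" using e by (intro mult_left_mono) auto
        then have "\<epsilon> * \<epsilon> \<le> 1/4" using e by linarith
        then have "\<epsilon>^2 \<le> 1/4" by (simp add: power2_eq_square)
        then have "(\<epsilon>^2)^n \<le> (1/4)^n" by (intro power_mono) auto
        then have "\<epsilon> * (\<epsilon>^2)^n \<le> 1 * (1/4)^n" using e by (intro mult_mono) auto
        then have "\<epsilon> * (\<epsilon> * (\<epsilon>^2)^n) \<le> \<epsilon> * (1/4)^n" using e by (simp add: mult_left_mono)
        then show ?thesis by (rule mult_left_mono) auto
      qed
      finally show ?thesis by (simp add: mult_ac)
    qed
    have "(\<Sum>n. (norm (W (n + Suc L)))^2) \<le> (\<Sum>n. \<epsilon> * (G^2 * (real L + 3)^2) * ((real n + 1)^2 * (1/4)^n))"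
      by (rule suminf_le[OF b]) (use summable_ignore_initial_segment[OF sW, of "Suc L"] sq in \<open>auto intro: summable_mult\<close>)
    also have "\<dots> = \<epsilon> * (G^2 * (real L + 3)^2 * (\<Sum>n. (real n + 1)^2 * (1/4)^n))"
      using suminf_mult[OF sq, of "\<epsilon> * (G^2 * (real L + 3)^2)"] by (simp add: mult_ac)
    finally show ?thesis .
  qed
  finally show "(\<Sum>n\<le>L. (norm (\<Sum>m. adj (s m) (W (n+m))))^2) \<le> (\<Sum>n\<le>L. (norm (v n))^2)
          + \<epsilon> * (G^2 * (real L + 3)^2 * (\<Sum>n. (real n + 1)^2 * (1/4)^n))"
    by (simp add: Z_def add.commute)
qed


lemma claimB:
  fixes s :: "nat \<Rightarrow> quat^'s^'r" and v :: "nat \<Rightarrow> quat^'r" and u :: "nat \<Rightarrow> quat^'r" and W :: "nat \<Rightarrow> quat^'r"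
  assumes sb: "\<And>m. norm (s m) \<le> B * (1/R)^m" and B: "B > 0" and R: "0 < R" "R \<le> 1"
    and lam: "\<forall>n\<le>L. \<forall>p\<le>L. (\<Sum>i\<le>L. (real i / real (L+1))^n * lam i p) = (if n = p then 1 else 0)"
    and e: "0 < \<epsilon>" "\<epsilon> \<le> R/2"
    and uD: "u = (\<lambda>i. \<Sum>p\<le>L. (lam i p / (\<epsilon>^p * sg p)) *\<^sub>R v p)"
    and WD: "W = (\<lambda>n. \<Sum>i\<le>L. (sg n * (\<epsilon> * (real i / real (L+1)))^n) *\<^sub>R u i)"
    and sz: "summable (\<lambda>m. adj (s m) (W (n+m)))" and nL: "n \<le> L"
  defines "G \<equiv> (\<Sum>p\<le>L. \<Sum>i\<le>L. \<bar>lam i p\<bar> * norm (v p))"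
  defines "K0 \<equiv> real (CARD('s) * CARD('r)) * B * G * (real L + 3)"
  shows "norm ((\<Sum>m. adj (s m) (W (n+m))) - (\<Sum>m\<le>L-n. adj (s m) (v (n+m))))
         \<le> \<epsilon> * (K0 * (1/R)^(L+1) * (\<Sum>j. (real j + 1) * (1/2)^j))"
proof -
  have e1: "\<epsilon> \<le> 1" using e R by simp
  note Wv = W_props(1)[OF lam e(1) e1 uD WD]
  note Wb = W_props(2)[OF lam e(1) e1 uD WD, folded G_def]
  have G0: "G \<ge> 0" unfolding G_def by (intro sum_nonneg) auto
  have K00: "K0 \<ge> 0" unfolding K0_def using B G0 by simp
  define k where "k = Suc (L - n)"
  define g where "g m = adj (s m) (W (n+m))" for m
  have "(\<Sum>m. adj (s m) (W (n+m))) = (\<Sum>j. g (j + k)) + (\<Sum>m<k. g m)"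
    unfolding g_def by (rule suminf_split_initial_segment[OF sz])
  moreover have "(\<Sum>m<k. g m) = (\<Sum>m\<le>L-n. adj (s m) (v (n+m)))"
    unfolding k_def lessThan_Suc_atMost g_def by (intro sum.cong refl) (use nL Wv in auto)
  ultimately have diff: "(\<Sum>m. adj (s m) (W (n+m))) - (\<Sum>m\<le>L-n. adj (s m) (v (n+m))) = (\<Sum>j. g (j + k))"
    by simp
  have sq: "summable (\<lambda>j. (real j + 1) * (1/2::real)^j)"
    using summable_polygeo[of "1/2" 1] by simp
  have bnd: "norm (g (j + k)) \<le> \<epsilon> * (K0 * (1/R)^(L+1) * ((real j + 1) * (1/2)^j))" for j
  proof -
    have idx: "n + (j + k) = j + Suc L" unfolding k_def using nL by simp
    have h1: "norm (g (j + k)) \<le> real (CARD('s) * CARD('r)) * norm (s (j+k)) * norm (W (j + Suc L))"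
      unfolding g_def idx by (rule norm_adj)
    have h2: "norm (s (j+k)) \<le> B * (1/R)^(j + Suc L)"
    proof -
      have "(1/R)^(j+k) \<le> (1/R)^(j + Suc L)"
        using R nL by (intro power_increasing) (auto simp: k_def)
      then show ?thesis using sb[of "j+k"] B by (meson mult_left_mono less_le order_trans)
    qed
    have h3: "norm (W (j + Suc L)) \<le> G * (real L + 3) * (real j + 1) * \<epsilon>^(Suc j)"
    proof -
      have "norm (W (j + Suc L)) \<le> G * (sg (j + Suc L) * \<epsilon>^(j + Suc L) / \<epsilon>^L)" by (rule Wb)
      also have "sg (j + Suc L) * \<epsilon>^(j + Suc L) / \<epsilon>^L = sg (j + Suc L) * \<epsilon>^(Suc j)"
        using e by (simp add: power_add)
      also have "\<dots> \<le> ((real L + 3) * (real j + 1)) * \<epsilon>^(Suc j)"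
        using sg_shift[of j "Suc L"] e by (intro mult_right_mono) (auto simp: add.commute)
      finally have "norm (W (j + Suc L)) \<le> G * (((real L + 3) * (real j + 1)) * \<epsilon>^(Suc j))"
        using G0 by (simp add: mult_left_mono)
      then show ?thesis by (simp add: mult_ac)
    qed
    have h5: "(\<epsilon>/R)^(Suc j) \<le> (\<epsilon>/R) * (1/2)^j"
    proof -
      have "\<epsilon>/R \<le> 1/2" using e R by (simp add: field_simps)
      then have "(\<epsilon>/R)^j \<le> (1/2)^j" using e R by (intro power_mono) auto
      then have "(\<epsilon>/R) * (\<epsilon>/R)^j \<le> (\<epsilon>/R) * (1/2)^j" using e R by (intro mult_left_mono) auto
      then show ?thesis by (simp only: power_Suc)
    qed
    have "norm (g (j + k)) \<le> real (CARD('s) * CARD('r)) * (B * (1/R)^(j + Suc L)) * (G * (real L + 3) * (real j + 1) * \<epsilon>^(Suc j))"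
    proof -
      have hh: "real (CARD('s) * CARD('r)) * norm (s (j+k)) \<le> real (CARD('s) * CARD('r)) * (B * (1/R)^(j + Suc L))"
        using h2 by (rule mult_left_mono) simp
      have "real (CARD('s) * CARD('r)) * norm (s (j+k)) * norm (W (j + Suc L)) \<le>
          real (CARD('s) * CARD('r)) * (B * (1/R)^(j + Suc L)) * (G * (real L + 3) * (real j + 1) * \<epsilon>^(Suc j))"
        by (rule mult_mono[OF hh h3]) (use B R in auto)
      then show ?thesis using h1 by linarith
    qed
    also have "\<dots> = K0 * (real j + 1) * (1/R)^L * (\<epsilon>/R)^(Suc j)"
      unfolding K0_def by (simp add: power_add power_divide field_simps)
    also have "\<dots> \<le> K0 * (real j + 1) * (1/R)^L * ((\<epsilon>/R) * (1/2)^j)"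
      using K00 R by (intro mult_left_mono[OF h5]) auto
    also have "\<dots> = \<epsilon> * (K0 * (1/R)^(L+1) * ((real j + 1) * (1/2)^j))"
      by (simp add: field_simps)
    finally show ?thesis .
  qed
  have "norm (\<Sum>j. g (j + k)) \<le> (\<Sum>j. \<epsilon> * (K0 * (1/R)^(L+1) * ((real j + 1) * (1/2)^j)))"
    by (rule norm_suminf_le[OF bnd]) (intro summable_mult sq)
  also have "\<dots> = \<epsilon> * (K0 * (1/R)^(L+1) * (\<Sum>j. (real j + 1) * (1/2)^j))"
    using suminf_mult[OF sq, of "\<epsilon> * (K0 * (1/R)^(L+1))"] by (simp add: mult_ac)
  finally show ?thesis unfolding diff .
qed


lemma FC_from:
  fixes s :: "nat \<Rightarrow> quat^'s^'r" and N :: "quat set"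
  assumes oN: "open N" and N0: "0 \<in> N"
    and hs: "\<forall>x\<in>N. summable (\<lambda>n. qsmat (P n x) (s n))"
    and kc: "kernel_converges s N" and pd: "pos_def_kernel (KS s) N"
  shows "FC s"
proof -
  obtain \<delta> where d: "\<delta> > 0" "ball 0 \<delta> \<subseteq> N" using oN N0 open_contains_ball by blast
  define R where "R = min (\<delta>/2) (1/2)"
  have R: "0 < R" "R \<le> 1/2" "R < \<delta>" using d by (auto simp: R_def)
  have "rq R \<in> N" by (rule rq_in[OF d(2)]) (use R in auto)
  then have hR: "summable (\<lambda>n. qsmat (P n (rq R)) (s n))" using hs by blast
  obtain B where B: "B > 0" "\<And>m. norm (s m) \<le> B * (1/R)^m"
    using s_bound[OF hR R(1)] by blast
  show ?thesis unfolding FC_def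
  proof (intro allI)
    fix L and v :: "nat \<Rightarrow> quat^'r"
    obtain lam where lam: "\<forall>n\<le>L. \<forall>p\<le>L. (\<Sum>i\<le>L. (real i / real (L+1))^n * lam i p) = (if n = p then 1 else 0)"
      using lagrange_exists[of L] by blast
    define u where "u e = (\<lambda>i. \<Sum>p\<le>L. (lam i p / (e^p * sg p)) *\<^sub>R v p)" for e :: real
    define W where "W e = (\<lambda>n. \<Sum>i\<le>L. (sg n * (e * (real i / real (L+1)))^n) *\<^sub>R u e i)" for e :: real
    define Zf where "Zf e n = (\<Sum>m. adj (s m) (W e (n+m)))" for e n
    define Tv where "Tv n = (\<Sum>m\<le>L-n. adj (s m) (v (n+m)))" for n
    define G where "G = (\<Sum>p\<le>L. \<Sum>i\<le>L. \<bar>lam i p\<bar> * norm (v p))"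
    define C1 where "C1 = G^2 * (real L + 3)^2 * (\<Sum>n. (real n + 1)^2 * (1/4::real)^n)"
    define K0 where "K0 = real (CARD('s) * CARD('r)) * B * G * (real L + 3)"
    define C2 where "C2 = K0 * (1/R)^(L+1) * (\<Sum>j. (real j + 1) * (1/2::real)^j)"
    define V where "V = (\<Sum>n\<le>L. (norm (v n))^2)"
    have ev: "\<forall>\<^sub>F e in at_right 0. 0 < e \<and> e \<le> R/2"
      using R by (subst eventually_at_right) (auto intro!: exI[of _ "R/2"])
    have A: "(\<Sum>n\<le>L. (norm (Zf e n))^2) \<le> V + e * C1" if "0 < e" "e \<le> R/2" for e
    proof -
      have e14: "e \<le> 1/4" and ed: "e < \<delta>" using that R by auto
      show ?thesis
        using claimA(2)[OF kc pd d(2) lam that(1) e14 ed u_def[of e] W_def[of e]]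
        unfolding Zf_def V_def C1_def G_def .
    qed
    have Bn: "norm (Zf e n - Tv n) \<le> e * C2" if "0 < e" "e \<le> R/2" "n \<le> L" for e n
    proof -
      have e14: "e \<le> 1/4" and ed: "e < \<delta>" and R1: "R \<le> 1" using that R by auto
      have sz: "summable (\<lambda>m. adj (s m) (W e (n+m)))"
        by (rule claimA(1)[OF kc pd d(2) lam that(1) e14 ed u_def[of e] W_def[of e]])
      show ?thesis
        using claimB[OF B(2) B(1) R(1) R1 lam that(1) that(2) u_def[of e] W_def[of e] sz that(3)]
        unfolding Zf_def Tv_def C2_def K0_def G_def .
    qed
    have Zlim: "((\<lambda>e. Zf e n) \<longlongrightarrow> Tv n) (at_right 0)" if "n \<le> L" for n
    proof -
      have g0: "((\<lambda>e::real. e * C2) \<longlongrightarrow> 0) (at_right 0)"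
        using tendsto_mult[OF tendsto_ident_at[of "0::real" "{0<..}"] tendsto_const[of C2]] by simp
      have "((\<lambda>e. Zf e n - Tv n) \<longlongrightarrow> 0) (at_right 0)"
        by (rule Lim_null_comparison[OF _ g0]) (rule eventually_mono[OF ev], use Bn that in auto)
      then have "((\<lambda>e. Zf e n - Tv n + Tv n) \<longlongrightarrow> 0 + Tv n) (at_right 0)"
        by (intro tendsto_add tendsto_const)
      then show ?thesis by simp
    qed
    have lhs: "((\<lambda>e. \<Sum>n\<le>L. (norm (Zf e n))^2) \<longlongrightarrow> (\<Sum>n\<le>L. (norm (Tv n))^2)) (at_right 0)"
      by (intro tendsto_sum tendsto_power tendsto_norm Zlim) auto
    have rhs: "((\<lambda>e::real. V + e * C1) \<longlongrightarrow> V) (at_right 0)"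
      using tendsto_add[OF tendsto_const[of V] tendsto_mult[OF tendsto_ident_at[of "0::real" "{0<..}"] tendsto_const[of C1]]]
      by simp
    have "(\<Sum>n\<le>L. (norm (Tv n))^2) \<le> V"
      by (rule tendsto_le[OF _ rhs lhs]) (auto intro: eventually_mono[OF ev] A)
    then show "(\<Sum>n\<le>L. (norm (\<Sum>m\<le>L-n. adj (s m) (v (n+m))))^2) \<le> (\<Sum>n\<le>L. (norm (v n))^2)"
      unfolding Tv_def V_def .
  qed
qed


lemma adj_unit_norm:
  fixes A :: "quat^'s^'r"
  shows "(norm (adj A (\<chi> b'. if b' = b then qone else 0)))^2 = (norm (A $ b))^2"
proof -
  have "adj A (\<chi> b'. if b' = b then qone else 0) = (\<chi> c. qcnj (A $ b $ c))"
    unfolding adj_def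
    by (simp add: vec_eq_iff if_distrib[where f="qmul _"] cong: if_cong)
  then show ?thesis by (simp add: norm_vec_sq)
qed

lemma norm_unit: "norm ((\<chi> b'. if b' = b then qone else 0) :: quat^'r) = 1"
proof -
  have "(norm ((\<chi> b'. if b' = b then qone else 0) :: quat^'r))^2 = 1"
    by (simp add: norm_vec_sq if_distrib[where f="\<lambda>z. (norm z)^2"] cong: if_cong)
  then show ?thesis using norm_ge_zero[of "(\<chi> b'. if b' = b then qone else 0) :: quat^'r"]
    by (simp add: power2_eq_1_iff)
qed

lemma FC_bound:
  fixes s :: "nat \<Rightarrow> quat^'s^'r"
  assumes "FC s"
  shows "norm (s m) \<le> real CARD('r)"
proof -
  have ue: "(norm (adj (s m) e))^2 \<le> (norm e)^2" for e :: "quat^'r"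
  proof -
    define v where "v n = (if n = m then e else 0)" for n
    have "(\<Sum>n\<le>m. (norm (\<Sum>j\<le>m-n. adj (s j) (v (n+j))))^2) \<le> (\<Sum>n\<le>m. (norm (v n))^2)"
      using assms unfolding FC_def by blast
    moreover have "(\<Sum>n\<le>m. (norm (v n))^2) = (norm e)^2"
      by (simp add: v_def if_distrib[where f="\<lambda>z. (norm z)^2"] cong: if_cong)
    moreover have f3: "(norm (\<Sum>j\<le>m-0. adj (s j) (v (0+j))))^2 \<le> (\<Sum>n\<le>m. (norm (\<Sum>j\<le>m-n. adj (s j) (v (n+j))))^2)"
      by (rule member_le_sum[of 0 "{..m}" "\<lambda>n. (norm (\<Sum>j\<le>m-n. adj (s j) (v (n+j))))^2"]) auto
    have f4: "(\<Sum>j\<le>m-0. adj (s j) (v (0+j))) = adj (s m) e"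
      by (simp add: v_def if_distrib[where f="adj _"] cong: if_cong)
    moreover have "(norm (adj (s m) e))^2 \<le> (\<Sum>n\<le>m. (norm (\<Sum>j\<le>m-n. adj (s j) (v (n+j))))^2)"
      using f3 unfolding f4 .
    ultimately show ?thesis by linarith
  qed
  have "(norm (s m))^2 = (\<Sum>b\<in>UNIV. (norm (s m $ b))^2)" by (rule norm_vec_sq)
  also have "\<dots> \<le> (\<Sum>b\<in>(UNIV::'r set). 1)"
  proof (rule sum_mono)
    fix b
    show "(norm (s m $ b))^2 \<le> 1"
      using ue[of "\<chi> b'. if b' = b then qone else 0"] by (simp add: adj_unit_norm norm_unit)
  qed
  also have "\<dots> = real CARD('r)" by simp
  also have "\<dots> \<le> (real CARD('r))^2"
    by (simp add: power2_eq_square)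
  finally show ?thesis by (rule power2_le_imp_le) simp
qed

lemma norm_E: "x \<in> ellipsoid \<Longrightarrow> norm x < 1"
proof -
  assume "x \<in> ellipsoid"
  then have h: "9 * (x0 x)^2 + (x1 x)^2 + (x2 x)^2 + (x3 x)^2 < 1" by (simp add: ellipsoid_def)
  have "(norm x)^2 = (x0 x)^2 + (x1 x)^2 + (x2 x)^2 + (x3 x)^2"
    by (simp add: norm_prod_def x0_def x1_def x2_def x3_def cmod_def)
  also have "\<dots> < 1" using h by (smt (verit) zero_le_power2)
  finally have lt: "(norm x)^2 < 1" .
  show ?thesis
  proof (rule ccontr)
    assume "\<not> norm x < 1"
    then have "1 \<le> norm x" by simp
    then have "1 \<le> (norm x)^2" by (rule one_le_power)
    with lt show False by simp
  qed
qed


lemma norm_qctrans: "norm (qctrans (A::quat^'s^'r)) = norm A"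
proof -
  have "(norm (qctrans A))^2 = (norm A)^2"
    unfolding qctrans_def by (simp add: norm_vec_sq) (rule sum.swap)
  then show ?thesis by (simp add: power2_eq_iff_nonneg)
qed

lemma conv_facts:
  fixes s :: "nat \<Rightarrow> quat^'s^'r"
  assumes sb: "\<And>m. norm (s m) \<le> Bs" and x: "norm x < 1"
  shows "summable (\<lambda>n. qsmat (P n x) (s n))"
    and "summable (ck_term s n x)"
    and "norm (ck s n x) \<le> Bs * (real n + 2) * norm x ^ n * (\<Sum>m. (real m + 1) * norm x ^ m)"
proof -
  have Bs: "Bs \<ge> 0" using sb[of 0] norm_ge_zero order_trans by blast
  define \<rho> where "\<rho> = norm x"
  have r: "0 \<le> \<rho>" "\<rho> < 1" using x by (auto simp: \<rho>_def)
  have sq: "summable (\<lambda>m. (real m + 1) * \<rho>^m)" using summable_polygeo[OF r, of 1] by simp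
  show "summable (\<lambda>n. qsmat (P n x) (s n))"
  proof (rule summable_comparison_test'[where N=0])
    show "summable (\<lambda>n. (2 * Bs) * ((real n + 1) * \<rho>^n))" by (intro summable_mult sq)
    fix n :: nat
    have "norm (qsmat (P n x) (s n)) = norm (P n x) * norm (s n)" by (rule norm_qsmat)
    also have "\<dots> \<le> (sg n * \<rho>^n) * Bs"
      using norm_P[of n x] sb[of n] r sg_pos[of n] by (intro mult_mono) (auto simp: \<rho>_def)
    also have "\<dots> \<le> (2 * (real n + 1) * \<rho>^n) * Bs"
      using sg_le2[of n] r Bs by (intro mult_right_mono) auto
    finally show "norm (qsmat (P n x) (s n)) \<le> (2 * Bs) * ((real n + 1) * \<rho>^n)" by (simp add: mult_ac)
  qed
  have tb: "norm (ck_term s n x m) \<le> (Bs * (real n + 2) * \<rho>^n) * ((real m + 1) * \<rho>^m)" for m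
  proof -
    have "norm (ck_term s n x m) = norm (P (n+m) x) * norm (s m)" by (simp add: ck_term_def norm_qsmat)
    also have "\<dots> \<le> (sg (m+n) * \<rho>^(n+m)) * Bs"
      using norm_P[of "n+m" x] sb[of m] r sg_pos[of "m+n"] by (intro mult_mono) (auto simp: \<rho>_def add.commute)
    also have "\<dots> \<le> ((real n + 2) * (real m + 1) * \<rho>^(n+m)) * Bs"
      using sg_shift[of m n] r Bs by (intro mult_right_mono) auto
    finally show ?thesis by (simp add: power_add mult_ac)
  qed
  show "summable (ck_term s n x)"
    by (rule summable_comparison_test'[where N=0, OF summable_mult[OF sq]]) (use tb in auto)
  have "norm (ck s n x) \<le> (\<Sum>m. (Bs * (real n + 2) * \<rho>^n) * ((real m + 1) * \<rho>^m))"
    unfolding ck_def by (rule norm_suminf_le[OF tb summable_mult[OF sq]])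
  also have "\<dots> = Bs * (real n + 2) * norm x ^ n * (\<Sum>m. (real m + 1) * norm x ^ m)"
    using suminf_mult[OF sq] by (simp add: \<rho>_def)
  finally show "norm (ck s n x) \<le> Bs * (real n + 2) * norm x ^ n * (\<Sum>m. (real m + 1) * norm x ^ m)" .
qed

lemma K_summable:
  fixes s :: "nat \<Rightarrow> quat^'s^'r"
  assumes sb: "\<And>m. norm (s m) \<le> Bs" and x: "norm x < 1" and y: "norm y < 1"
  shows "summable (\<lambda>n. K_term s n x y)"
proof -
  have Bs: "Bs \<ge> 0" using sb[of 0] norm_ge_zero order_trans by blast
  define Sx where "Sx = (\<Sum>m. (real m + 1) * norm x ^ m)"
  define Sy where "Sy = (\<Sum>m. (real m + 1) * norm y ^ m)"
  have Sx: "Sx \<ge> 0" unfolding Sx_def by (intro suminf_nonneg) (use summable_polygeo[of "norm x" 1] x in auto)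
  have Sy: "Sy \<ge> 0" unfolding Sy_def by (intro suminf_nonneg) (use summable_polygeo[of "norm y" 1] y in auto)
  define q where "q = norm x * norm y"
  have q: "0 \<le> q" "q < 1"
  proof -
    show "0 \<le> q" by (simp add: q_def)
    have "norm x * norm y \<le> norm x * 1" using y by (intro mult_left_mono) auto
    then show "q < 1" using x by (simp add: q_def)
  qed
  define cM where "cM = real (CARD('r) * CARD('r) * CARD('s))"
  define C where "C = 4 * norm (qmat_id :: quat^'r^'r) + cM * Bs^2 * Sx * Sy * 4"
  show ?thesis
  proof (rule summable_comparison_test'[where N=0])
    show "summable (\<lambda>n. C * ((real n + 1)^2 * q^n))" by (intro summable_mult summable_polygeo q)
    fix n :: nat
    have n2: "(real n + 2)^2 \<le> 4 * (real n + 1)^2" by (simp add: power2_eq_square algebra_simps)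
    have t1: "norm (qsmat (qmul (P n x) (qcnj (P n y))) (qmat_id :: quat^'r^'r)) \<le> 4 * norm (qmat_id :: quat^'r^'r) * ((real n + 1)^2 * q^n)"
    proof -
      have "norm (qsmat (qmul (P n x) (qcnj (P n y))) (qmat_id :: quat^'r^'r)) = norm (P n x) * norm (P n y) * norm (qmat_id :: quat^'r^'r)"
        by (simp add: norm_qsmat norm_qmul)
      also have "\<dots> \<le> (2 * (real n + 1) * norm x ^ n) * (2 * (real n + 1) * norm y ^ n) * norm (qmat_id :: quat^'r^'r)"
      proof (intro mult_right_mono mult_mono)
        show "norm (P n x) \<le> 2 * (real n + 1) * norm x ^ n"
          using norm_P[of n x] sg_le2[of n] by (meson mult_right_mono norm_ge_zero order_trans zero_le_power)
        show "norm (P n y) \<le> 2 * (real n + 1) * norm y ^ n"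
          using norm_P[of n y] sg_le2[of n] by (meson mult_right_mono norm_ge_zero order_trans zero_le_power)
      qed auto
      also have "\<dots> = 4 * norm (qmat_id :: quat^'r^'r) * ((real n + 1)^2 * q^n)"
        by (simp add: q_def power_mult_distrib power2_eq_square mult_ac) (simp add: algebra_simps)
      finally show ?thesis .
    qed
    have t2: "norm (qmatmul (ck s n x) (qctrans (ck s n y))) \<le> cM * Bs^2 * Sx * Sy * 4 * ((real n + 1)^2 * q^n)"
    proof -
      have "norm (qmatmul (ck s n x) (qctrans (ck s n y))) \<le> cM * norm (ck s n x) * norm (ck s n y)"
        using norm_qmatmul[of "ck s n x" "qctrans (ck s n y)"] by (simp add: norm_qctrans cM_def mult_ac)
      also have "\<dots> \<le> cM * (Bs * (real n + 2) * norm x ^ n * Sx) * (Bs * (real n + 2) * norm y ^ n * Sy)"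
        using conv_facts(3)[OF sb x, where n=n] conv_facts(3)[OF sb y, where n=n] Bs Sx Sy
        unfolding Sx_def Sy_def cM_def by (intro mult_mono mult_left_mono) auto
      also have "\<dots> = cM * Bs^2 * Sx * Sy * ((real n + 2)^2 * q^n)"
        by (simp add: q_def power_mult_distrib power2_eq_square mult_ac)
      also have "\<dots> \<le> cM * Bs^2 * Sx * Sy * (4 * (real n + 1)^2 * q^n)"
        using n2 q Sx Sy Bs by (intro mult_left_mono mult_right_mono) (auto simp: cM_def)
      finally show ?thesis by (simp add: mult_ac)
    qed
    have "norm (K_term s n x y) \<le> norm (qsmat (qmul (P n x) (qcnj (P n y))) (qmat_id :: quat^'r^'r)) + norm (qmatmul (ck s n x) (qctrans (ck s n y)))"
      unfolding K_term_def by (rule norm_triangle_ineq4)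
    also have "\<dots> \<le> C * ((real n + 1)^2 * q^n)"
      using t1 t2 unfolding C_def by (simp add: algebra_simps)
    finally show "norm (K_term s n x y) \<le> C * ((real n + 1)^2 * q^n)" .
  qed
qed


lemma posdef_E:
  fixes s :: "nat \<Rightarrow> quat^'s^'r"
  assumes fc: "FC s" and sb: "\<And>m. norm (s m) \<le> Bs"
  shows "pos_def_kernel (KS s) ellipsoid"
  unfolding pos_def_kernel_def
proof (intro allI impI)
  fix k and y :: "nat \<Rightarrow> quat" and u :: "nat \<Rightarrow> quat^'r"
  assume yE: "\<forall>i<k. y i \<in> ellipsoid"
  have yn: "norm (y i) < 1" if "i < k" for i using yE that by (simp add: norm_E)
  have ck_s: "\<forall>i<k. summable (ck_term s n (y i))" for n
  proof (intro allI impI)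
    fix i assume "i < k"
    show "summable (ck_term s n (y i))" by (rule conv_facts(2)[OF sb yn[OF \<open>i < k\<close>]])
  qed
  have K_s: "\<forall>i<k. \<forall>j<k. summable (\<lambda>n. K_term s n (y i) (y j))"
  proof (intro allI impI)
    fix i j assume "i < k" "j < k"
    show "summable (\<lambda>n. K_term s n (y i) (y j))" by (rule K_summable[OF sb yn[OF \<open>i < k\<close>] yn[OF \<open>j < k\<close>]])
  qed
  define W where "W n = (\<Sum>j<k. qv (qcnj (P n (y j))) (u j))" for n
  define f where "f n = (norm (\<Sum>j<k. qv (qcnj (P n (y j))) (u j)))^2 - (norm (\<Sum>j<k. adj (ck s n (y j)) (u j)))^2" for n
  note KF = KS_form[OF K_s, of u, folded f_def]
  have sz: "summable (\<lambda>m. adj (s m) (W (n+m)))" for n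
    using ck_adj(1)[OF ck_s[of n], of u] unfolding W_def .
  have Zy: "(\<Sum>j<k. adj (ck s n (y j)) (u j)) = (\<Sum>m. adj (s m) (W (n+m)))" for n
    using ck_adj(2)[OF ck_s[of n], of u] unfolding W_def .
  define Z where "Z n = (\<Sum>m. adj (s m) (W (n+m)))" for n
  have fef: "f = (\<lambda>n. (norm (W n))^2 - (norm (Z n))^2)"
    by (rule ext) (simp only: f_def Zy Z_def W_def)
  define \<rho> where "\<rho> = Max (insert 0 ((\<lambda>j. norm (y j)) ` {..<k}))"
  have r0: "0 \<le> \<rho>" unfolding \<rho>_def by (rule Max_ge) auto
  have r1: "\<rho> < 1" unfolding \<rho>_def using yn by (subst Max_less_iff) auto
  have ry: "norm (y j) \<le> \<rho>" if "j < k" for j unfolding \<rho>_def by (rule Max_ge) (use that in auto)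
  define U where "U = (\<Sum>j<k. norm (u j))"
  have U0: "U \<ge> 0" unfolding U_def by (intro sum_nonneg) auto
  have Wb: "norm (W n) \<le> 2 * (real n + 1) * \<rho>^n * U" for n
  proof -
    have "norm (W n) \<le> (\<Sum>j<k. norm (qv (qcnj (P n (y j))) (u j)))" unfolding W_def by (rule norm_sum)
    also have "\<dots> \<le> (\<Sum>j<k. (2 * (real n + 1) * \<rho>^n) * norm (u j))"
    proof (rule sum_mono)
      fix j assume j: "j \<in> {..<k}"
      have "norm (P n (y j)) \<le> sg n * norm (y j) ^ n" by (rule norm_P)
      also have "\<dots> \<le> (2 * (real n + 1)) * \<rho>^n"
        using sg_le2[of n] sg_pos[of n] ry[of j] j by (intro mult_mono power_mono) auto
      finally show "norm (qv (qcnj (P n (y j))) (u j)) \<le> (2 * (real n + 1) * \<rho>^n) * norm (u j)"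
        by (simp add: norm_qv mult_right_mono)
    qed
    also have "\<dots> = 2 * (real n + 1) * \<rho>^n * U" by (simp add: U_def sum_distrib_left)
    finally show ?thesis .
  qed
  have sW: "summable (\<lambda>n. (norm (W n))^2)"
  proof (rule summable_comparison_test'[where N=0])
    show "summable (\<lambda>n. (4 * U^2) * ((real n + 1)^2 * (\<rho>^2)^n))"
    proof (intro summable_mult summable_polygeo)
      show "0 \<le> \<rho>^2" by simp
      have "\<rho> * \<rho> \<le> \<rho> * 1" using r0 r1 by (intro mult_left_mono) auto
      then show "\<rho>^2 < 1" using r1 by (simp add: power2_eq_square)
    qed
    fix n :: nat
    have "(norm (W n))^2 \<le> (2 * (real n + 1) * \<rho>^n * U)^2" by (intro sq_mono Wb) simp
    also have "\<dots> = (4 * U^2) * ((real n + 1)^2 * (\<rho>^2)^n)"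
      by (simp add: power_mult_distrib power_mult[symmetric] mult_ac) (simp add: power2_eq_square algebra_simps)
    finally show "norm ((norm (W n))^2) \<le> (4 * U^2) * ((real n + 1)^2 * (\<rho>^2)^n)" by simp
  qed
  note CI = contr_inf[OF fc sW sz]
  have "suminf f = (\<Sum>n. (norm (W n))^2) - (\<Sum>n. (norm (Z n))^2)"
    unfolding fef using suminf_diff[OF sW CI(1)[folded Z_def]] by simp
  then have "suminf f \<ge> 0" using CI(2)[folded Z_def] by simp
  then show "qnonneg (\<Sum>i<k. \<Sum>j<k. qhform (u i) (KS s (y i) (y j)) (u j))"
    using KF(2) by (simp add: qnonneg_rq)
qed


lemma powser_unique:
  fixes c :: "nat \<Rightarrow> real"
  assumes r: "r > 0" and sm: "\<And>x. \<bar>x\<bar> < r \<Longrightarrow> (\<lambda>n. c n * x^n) sums 0"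
  shows "c m = 0"
proof (rule ccontr)
  assume cm: "c m \<noteq> 0"
  show False
  proof (cases "m = 0")
    case True
    have "(\<lambda>n. c n * 0^n) sums c 0" by (rule powser_sums_zero)
    moreover have "(\<lambda>n. c n * 0^n) sums 0" using sm[of 0] r by simp
    ultimately have "c 0 = 0" by (rule sums_unique2)
    then show False using cm True by simp
  next
    case False
    have sm': "\<And>x. norm (x - 0) < r \<Longrightarrow> (\<lambda>n. c n * (x - 0)^n) sums ((\<lambda>_. 0::real) x)"
      using sm by simp
    have key: "\<And>s::real. 0 < s \<Longrightarrow> (\<And>z::real. z \<in> cball 0 s - {0} \<Longrightarrow> (\<lambda>_. 0::real) z \<noteq> 0) \<Longrightarrow> False"
    proof -
      fix s :: real assume s: "0 < s" "\<And>z::real. z \<in> cball 0 s - {0} \<Longrightarrow> (\<lambda>_. 0::real) z \<noteq> 0"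
      have "s \<in> cball (0::real) s - {0}" using s(1) by simp
      from s(2)[OF this] show False by simp
    qed
    show False
      by (rule powser_0_nonzero[where a=c and \<xi>="0::real" and f="\<lambda>_. 0" and m=m, OF r sm' _ cm]) (use False key in auto)
  qed
qed

lemma comp_bl:
  assumes "bounded_linear (g :: quat \<Rightarrow> real)"
  shows "bounded_linear (\<lambda>A::quat^'s^'r. g (A $ a $ b))"
proof -
  have "bounded_linear (\<lambda>A::quat^'s^'r. (A $ a) $ b)"
    using bounded_linear_compose[OF bounded_linear_vec_nth[of b] bounded_linear_vec_nth[of a]] by simp
  then show ?thesis using bounded_linear_compose[OF assms] by blast
qed

lemma unique_coeffs:
  fixes s t :: "nat \<Rightarrow> quat^'s^'r"
  assumes r: "r > 0"
    and h: "\<And>x. \<bar>x\<bar> < r \<Longrightarrow> summable (\<lambda>n. qsmat (P n (rq x)) (s n)) \<and> summable (\<lambda>n. qsmat (P n (rq x)) (t n))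
                 \<and> series_fun t (rq x) = series_fun s (rq x)"
  shows "t = s"
proof -
  define d where "d n = t n - s n" for n
  have ds: "(\<lambda>n. (sg n * x^n) *\<^sub>R d n) sums 0" if "\<bar>x\<bar> < r" for x
  proof -
    from h[OF that] have s1: "summable (\<lambda>n. qsmat (P n (rq x)) (s n))"
      and s2: "summable (\<lambda>n. qsmat (P n (rq x)) (t n))"
      and eq: "series_fun t (rq x) = series_fun s (rq x)" by auto
    have "(\<lambda>n. qsmat (P n (rq x)) (t n) - qsmat (P n (rq x)) (s n)) sums (series_fun t (rq x) - series_fun s (rq x))"
      unfolding series_fun_def by (intro sums_diff summable_sums s1 s2)
    then show ?thesis using eq by (simp add: d_def P_rq qsmat_rq scaleR_diff_right)
  qed
  have comp0: "g (d n $ a $ b) = 0" if g: "bounded_linear g" for g :: "quat \<Rightarrow> real" and n a b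
  proof -
    interpret bl: bounded_linear "\<lambda>A::quat^'s^'r. g (A $ a $ b)" by (rule comp_bl[OF g])
    have "(\<lambda>n. (sg n * g (d n $ a $ b)) * x^n) sums 0" if "\<bar>x\<bar> < r" for x
    proof -
      have "(\<lambda>n. g (((sg n * x^n) *\<^sub>R d n) $ a $ b)) sums g ((0::quat^'s^'r) $ a $ b)"
        by (rule bl.sums[OF ds[OF that]])
      then show ?thesis by (simp add: bl.scaleR[of _ "d _", simplified] linear_0[OF bounded_linear.linear[OF g]] mult_ac)
    qed
    then have "sg n * g (d n $ a $ b) = 0" by (rule powser_unique[OF r])
    then show ?thesis using sg_pos[of n] by simp
  qed
  have "d n = 0" for n
  proof -
    have "d n $ a $ b = 0" for a b
    proof -
      have bl1: "bounded_linear (\<lambda>q::quat. Re (fst q))" by (rule bl_re)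
      have bl2: "bounded_linear (\<lambda>q::quat. Im (fst q))"
        using bounded_linear_compose[OF bounded_linear_Im bounded_linear_fst] by (simp add: o_def)
      have bl3: "bounded_linear (\<lambda>q::quat. Re (snd q))"
        using bounded_linear_compose[OF bounded_linear_Re bounded_linear_snd] by (simp add: o_def)
      have bl4: "bounded_linear (\<lambda>q::quat. Im (snd q))"
        using bounded_linear_compose[OF bounded_linear_Im bounded_linear_snd] by (simp add: o_def)
      show ?thesis
        using comp0[OF bl1, of n a b] comp0[OF bl2, of n a b] comp0[OF bl3, of n a b] comp0[OF bl4, of n a b]
        by (simp add: prod_eq_iff complex_eq_iff zero_prod_def)
    qed
    then show ?thesis by (simp add: vec_eq_iff)
  qed
  then show ?thesis by (auto simp: d_def fun_eq_iff)
qed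


lemma rq_E: "\<bar>t\<bar> < 1/3 \<Longrightarrow> rq t \<in> ellipsoid"
proof -
  assume "\<bar>t\<bar> < 1/3"
  then have "\<bar>3 * t\<bar> < 1" by simp
  then have "(3*t)^2 < 1" using abs_square_less_1[of "3*t"] by blast
  then have "9 * t^2 < 1" by (simp add: power_mult_distrib)
  then show ?thesis by (simp add: ellipsoid_def rq_def x0_def x1_def x2_def x3_def)
qed

theorem mainTheorem12:
  fixes s :: "nat \<Rightarrow> quat^'s^'r" and N :: "quat set"
  assumes "open N" and "0 \<in> N"
    and "\<forall>x\<in>N. summable (\<lambda>n. qsmat (P n x) (s n))"
    and "kernel_converges s N"
    and "pos_def_kernel (KS s) N"
  shows "(\<forall>x\<in>ellipsoid. summable (\<lambda>n. qsmat (P n x) (s n)))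
       \<and> schur_multiplier s ellipsoid
       \<and> (\<forall>t :: nat \<Rightarrow> quat^'s^'r. schur_multiplier t ellipsoid
              \<and> (\<forall>x\<in>N \<inter> ellipsoid. series_fun t x = series_fun s x)
            \<longrightarrow> (\<forall>x\<in>ellipsoid. series_fun t x = series_fun s x))"
proof -
  have fc: "FC s" by (rule FC_from[OF assms])
  have sb: "\<And>m. norm (s m) \<le> real CARD('r)" by (rule FC_bound[OF fc])
  have c1: "\<forall>x\<in>ellipsoid. summable (\<lambda>n. qsmat (P n x) (s n))"
  proof
    fix x assume "x \<in> ellipsoid"
    then show "summable (\<lambda>n. qsmat (P n x) (s n))" by (intro conv_facts(1)[OF sb] norm_E)
  qed
  have kcE: "kernel_converges s ellipsoid"
    unfolding kernel_converges_def
  proof (intro conjI ballI allI)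
    fix x n assume "x \<in> ellipsoid"
    then show "summable (ck_term s n x)" by (intro conv_facts(2)[OF sb] norm_E)
  next
    fix x y assume "x \<in> ellipsoid" "y \<in> ellipsoid"
    then show "summable (\<lambda>n. K_term s n x y)" by (intro K_summable[OF sb] norm_E)
  qed
  have c2: "schur_multiplier s ellipsoid"
    unfolding schur_multiplier_def using c1 kcE posdef_E[OF fc sb] by (intro conjI)
  have c3: "\<forall>x\<in>ellipsoid. series_fun t x = series_fun s x"
    if t: "schur_multiplier t ellipsoid" "\<forall>x\<in>N \<inter> ellipsoid. series_fun t x = series_fun s x"
    for t :: "nat \<Rightarrow> quat^'s^'r"
  proof -
    obtain \<delta> where d: "\<delta> > 0" "ball 0 \<delta> \<subseteq> N" using assms(1,2) open_contains_ball by blast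
    define r where "r = min \<delta> (1/3)"
    have r: "r > 0" using d by (simp add: r_def)
    have "t = s"
    proof (rule unique_coeffs[OF r])
      fix x :: real assume x: "\<bar>x\<bar> < r"
      have xN: "rq x \<in> N" by (rule rq_in[OF d(2)]) (use x in \<open>simp add: r_def\<close>)
      have xE: "rq x \<in> ellipsoid" by (rule rq_E) (use x in \<open>simp add: r_def\<close>)
      show "summable (\<lambda>n. qsmat (P n (rq x)) (s n)) \<and> summable (\<lambda>n. qsmat (P n (rq x)) (t n))
            \<and> series_fun t (rq x) = series_fun s (rq x)"
      proof (intro conjI)
        show "summable (\<lambda>n. qsmat (P n (rq x)) (s n))" using c1 xE by simp
        show "summable (\<lambda>n. qsmat (P n (rq x)) (t n))" using t(1) xE unfolding schur_multiplier_def by simp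
        show "series_fun t (rq x) = series_fun s (rq x)" using t(2) xE xN by simp
      qed
    qed
    then show ?thesis by simp
  qed
  have c3': "\<forall>t :: nat \<Rightarrow> quat^'s^'r. schur_multiplier t ellipsoid
              \<and> (\<forall>x\<in>N \<inter> ellipsoid. series_fun t x = series_fun s x)
            \<longrightarrow> (\<forall>x\<in>ellipsoid. series_fun t x = series_fun s x)"
  proof (intro allI impI)
    fix t :: "nat \<Rightarrow> quat^'s^'r"
    assume h: "schur_multiplier t ellipsoid \<and> (\<forall>x\<in>N \<inter> ellipsoid. series_fun t x = series_fun s x)"
    show "\<forall>x\<in>ellipsoid. series_fun t x = series_fun s x"
      by (rule c3) (use h in simp_all)
  qed
  show ?thesis using c1 c2 c3' by (intro conjI)
qed


end
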